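(* Let $d>1$ be an integer and $G=\langle a,b\mid aba^{-1}=b^d\rangle$. Let $S=\{(m,i): m,i\in\mathbb{N},\ m\geq1,\ \gcd(m,d)=1,\ 0\leq i<m\}$, with $(m_1,i_1)\sim(m_2,i_2)$ iff $m_1=m_2$ and $i_1\equiv i_2d^j\pmod{m_1}$ for some $j\in\mathbb{Z}$. Define the degree of the class $\overline{(m,i)}$ to be $m\cdot\mathrm{ord}_i(d)$, where $\mathrm{ord}_i(d)$ is the order of $d$ in $(\mathbb{Z}/m')^{\times}$ with $m'=m/\gcd(m,i)$. Then for every $n\geq1$ the number of conjugacy classes of subgroups of index $n$ in $G$ equals the number of classes $\overline{(m,i)}\in S/\sim$ whose degree divides $n$.
   Context: Here $\gcd(m,0)=m$, and $(\mathbb{Z}/1)^\times$ is the trivial group, so the order of $d$ in it is $1$. *)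

theory Defs
  imports "HOL-Algebra.Coset" "HOL-Number_Theory.Pocklington"
begin

datatype gen = GA | GB

type_synonym letter = "gen \<times> bool"   (* (generator, True = inverse letter) *)

inductive bs_eq :: "nat \<Rightarrow> letter list \<Rightarrow> letter list \<Rightarrow> bool" for d :: nat where
  bs_refl: "bs_eq d w w"
| bs_sym: "bs_eq d u v \<Longrightarrow> bs_eq d v u"
| bs_trans: "bs_eq d u v \<Longrightarrow> bs_eq d v w \<Longrightarrow> bs_eq d u w"
| bs_cancel: "bs_eq d (u @ [(g, s), (g, \<not> s)] @ v) (u @ v)"
| bs_rel: "bs_eq d (u @ [(GA, False), (GB, False), (GA, True)] @ v) (u @ replicate d (GB, False) @ v)"

definition BS :: "nat \<Rightarrow> letter list set monoid" where
  "BS d = \<lparr> carrier = {{v. bs_eq d w v} | w. True},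
            monoid.mult = (\<lambda>X Y. {v. \<exists>x\<in>X. \<exists>y\<in>Y. bs_eq d (x @ y) v}),
            one = {v. bs_eq d [] v} \<rparr>"

definition subgroups_of_index :: "('a, 'b) monoid_scheme \<Rightarrow> nat \<Rightarrow> 'a set set" where
  "subgroups_of_index G n = {H. subgroup H G \<and> finite (rcosets\<^bsub>G\<^esub> H) \<and> card (rcosets\<^bsub>G\<^esub> H) = n}"

definition subgroup_conj :: "('a, 'b) monoid_scheme \<Rightarrow> ('a set \<times> 'a set) set" where
  "subgroup_conj G = {(H, K). subgroup H G \<and> subgroup K G \<and>
      (\<exists>g\<in>carrier G. K = (g <#\<^bsub>G\<^esub> H) #>\<^bsub>G\<^esub> inv\<^bsub>G\<^esub> g)}"

definition num_conj_classes_index :: "('a, 'b) monoid_scheme \<Rightarrow> nat \<Rightarrow> nat" where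
  "num_conj_classes_index G n = card (subgroups_of_index G n // subgroup_conj G)"

definition S_set :: "nat \<Rightarrow> (nat \<times> nat) set" where
  "S_set d = {(m, i). m \<ge> 1 \<and> gcd m d = 1 \<and> i < m}"

text \<open>(m1,i1) ~ (m2,i2) iff m1 = m2 and i1 = i2 d^j mod m1 for some integer j;
  for negative j, d^j denotes the inverse of d^(-j) modulo m1 (d is a unit mod m1),
  so this is written as: i1 = i2 d^j or i2 = i1 d^j mod m1 for some natural j.\<close>

definition S_rel :: "nat \<Rightarrow> ((nat \<times> nat) \<times> (nat \<times> nat)) set" where
  "S_rel d = {((m1, i1), (m2, i2)). (m1, i1) \<in> S_set d \<and> (m2, i2) \<in> S_set d \<and> m1 = m2 \<and>
      (\<exists>j::nat. [i1 = i2 * d ^ j] (mod m1) \<or> [i2 = i1 * d ^ j] (mod m1))}"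

definition S_degree :: "nat \<Rightarrow> nat \<times> nat \<Rightarrow> nat" where
  "S_degree d p = (case p of (m, i) \<Rightarrow> m * Pocklington.ord (m div gcd m i) d)"

definition class_degree :: "nat \<Rightarrow> (nat \<times> nat) set \<Rightarrow> nat" where
  "class_degree d C = S_degree d (SOME p. p \<in> C)"

end

theory Submission
  imports Defs
begin

definition Zd :: "nat \<Rightarrow> rat set" where
  "Zd d = {y. \<exists>(q::int) (p::nat). y = of_int q / of_nat d ^ p}"

definition zc :: "nat \<Rightarrow> nat \<Rightarrow> rat \<Rightarrow> rat \<Rightarrow> bool" where
  "zc d m y y' \<longleftrightarrow> (\<exists>z\<in>Zd d. y - y' = of_nat m * z)"

definition MM :: "nat \<Rightarrow> (rat \<times> int) monoid" where
  "MM d = \<lparr>carrier = Zd d \<times> UNIV,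
     monoid.mult = (\<lambda>a b. (fst a + of_nat d powi snd a * fst b, snd a + snd b)),
     one = (0, 0)\<rparr>"

context fixes d :: nat assumes d1: "d > 1" begin

lemma Dnz: "(of_nat d :: rat) \<noteq> 0" using d1 by simp

lemma Zd_int[simp]: "of_int q \<in> Zd d"
  unfolding Zd_def mem_Collect_eq by (intro exI[of _ q] exI[of _ 0]) simp

lemma Zd_nat[simp]: "of_nat q \<in> Zd d"
  using Zd_int[of "int q"] by simp

lemma Zd_0[simp]: "0 \<in> Zd d" using Zd_int[of 0] by simp
lemma Zd_1[simp]: "1 \<in> Zd d" using Zd_int[of 1] by simp

lemma Zd_add[intro]: "a \<in> Zd d \<Longrightarrow> b \<in> Zd d \<Longrightarrow> a + b \<in> Zd d"
proof -
  assume "a \<in> Zd d" "b \<in> Zd d"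
  then obtain q p q' p' where a: "a = of_int q / of_nat d ^ p" and b: "b = of_int q' / of_nat d ^ p'"
    unfolding Zd_def by blast
  have "a + b = of_int (q * int d ^ p' + q' * int d ^ p) / of_nat d ^ (p + p')"
    using Dnz by (simp add: a b field_simps power_add)
  thus ?thesis unfolding Zd_def by blast
qed

lemma Zd_mult[intro]: "a \<in> Zd d \<Longrightarrow> b \<in> Zd d \<Longrightarrow> a * b \<in> Zd d"
proof -
  assume "a \<in> Zd d" "b \<in> Zd d"
  then obtain q p q' p' where a: "a = of_int q / of_nat d ^ p" and b: "b = of_int q' / of_nat d ^ p'"
    unfolding Zd_def by blast
  have "a * b = of_int (q * q') / of_nat d ^ (p + p')"
    using Dnz by (simp add: a b field_simps power_add)
  thus ?thesis unfolding Zd_def by blast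
qed

lemma Zd_uminus[intro]: "a \<in> Zd d \<Longrightarrow> - a \<in> Zd d"
proof -
  assume "a \<in> Zd d"
  then obtain q p where a: "a = of_int q / of_nat d ^ p" unfolding Zd_def by blast
  have "- a = of_int (- q) / of_nat d ^ p" by (simp add: a)
  thus ?thesis unfolding Zd_def by blast
qed

lemma Zd_diff[intro]: "a \<in> Zd d \<Longrightarrow> b \<in> Zd d \<Longrightarrow> a - b \<in> Zd d"
  using Zd_add[of a "-b"] Zd_uminus[of b] by simp

lemma Zd_powi[intro, simp]: "(of_nat d :: rat) powi s \<in> Zd d"
proof (cases "s \<ge> 0")
  case True
  then obtain n where "s = int n" using nonneg_eq_int by blast
  thus ?thesis using Zd_nat[of "d ^ n"] by simp
next
  case False
  then have "- s \<ge> 0" by simp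
  then obtain n where "- s = int n" using nonneg_eq_int by blast
  then have s: "s = - int n" by simp
  have "(of_nat d :: rat) powi s = of_int 1 / of_nat d ^ n"
    by (simp add: s power_int_minus field_simps)
  thus ?thesis unfolding Zd_def by blast
qed

lemma Zd_pow[intro, simp]: "(of_nat d :: rat) ^ n \<in> Zd d"
  using Zd_powi[of "int n"] by simp

lemma Zd_inv_pow[intro, simp]: "1 / (of_nat d :: rat) ^ n \<in> Zd d"
  unfolding Zd_def mem_Collect_eq by (intro exI[of _ 1] exI[of _ n]) simp

lemma zc_refl[simp]: "zc d m y y"
  unfolding zc_def by (rule bexI[of _ 0]) auto

lemma zc_sym: "zc d m y y' \<Longrightarrow> zc d m y' y"
  unfolding zc_def by (metis Zd_uminus minus_diff_eq mult_minus_right)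

lemma zc_trans: "zc d m y y' \<Longrightarrow> zc d m y' y'' \<Longrightarrow> zc d m y y''"
  unfolding zc_def
proof (elim bexE)
  fix z z' assume "z \<in> Zd d" "y - y' = of_nat m * z" "z' \<in> Zd d" "y' - y'' = of_nat m * z'"
  thus "\<exists>z\<in>Zd d. y - y'' = of_nat m * z"
    by (intro bexI[of _ "z + z'"]) (auto simp: algebra_simps)
qed

lemma zc_add: "zc d m a b \<Longrightarrow> zc d m a' b' \<Longrightarrow> zc d m (a + a') (b + b')"
proof -
  assume "zc d m a b" "zc d m a' b'"
  then obtain z z' where z: "z \<in> Zd d" "a - b = of_nat m * z" and z': "z' \<in> Zd d" "a' - b' = of_nat m * z'"
    unfolding zc_def by blast
  have "a + a' - (b + b') = (a - b) + (a' - b')" by simp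
  also have "\<dots> = of_nat m * z + of_nat m * z'" using z(2) z'(2) by simp
  also have "\<dots> = of_nat m * (z + z')" by (simp add: distrib_left)
  finally show ?thesis unfolding zc_def using Zd_add[OF z(1) z'(1)] by blast
qed

lemma zc_neg: "zc d m a b \<Longrightarrow> zc d m (- a) (- b)"
  unfolding zc_def
proof (elim bexE)
  fix z assume "z \<in> Zd d" "a - b = of_nat m * z"
  thus "\<exists>z\<in>Zd d. - a - (- b) = of_nat m * z"
    by (intro bexI[of _ "- z"]) (auto simp: algebra_simps)
qed

lemma zc_diff: "zc d m a b \<Longrightarrow> zc d m a' b' \<Longrightarrow> zc d m (a - a') (b - b')"
  using zc_add[of m a b "-a'" "-b'"] zc_neg[of m a' b'] by simp

lemma zc_mult: "w \<in> Zd d \<Longrightarrow> zc d m a b \<Longrightarrow> zc d m (w * a) (w * b)"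
  unfolding zc_def
proof (elim bexE)
  fix z assume "w \<in> Zd d" "z \<in> Zd d" "a - b = of_nat m * z"
  thus "\<exists>z\<in>Zd d. w * a - w * b = of_nat m * z"
    by (intro bexI[of _ "w * z"]) (auto simp: algebra_simps)
qed

lemma zc_0_iff: "zc d m y 0 \<longleftrightarrow> (\<exists>z\<in>Zd d. y = of_nat m * z)"
  unfolding zc_def by simp

lemma zc_dvd: "zc d m a b \<Longrightarrow> g dvd m \<Longrightarrow> zc d g a b"
  unfolding zc_def
proof (elim bexE)
  fix z assume "g dvd m" "z \<in> Zd d" "a - b = of_nat m * z"
  then obtain t where "m = g * t" by (auto elim: dvdE)
  thus "\<exists>z'\<in>Zd d. a - b = of_nat g * z'"
    using \<open>z \<in> Zd d\<close> \<open>a - b = of_nat m * z\<close> by (intro bexI[of _ "of_nat t * z"]) auto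
qed

lemma zc_scale: "c > 0 \<Longrightarrow> zc d (c * g) (of_nat c * a) (of_nat c * b) \<longleftrightarrow> zc d g a b"
proof -
  assume c: "c > 0"
  have e: "(of_nat c * a - of_nat c * b = of_nat (c * g) * z) = (a - b = of_nat g * z)" for z :: rat
  proof -
    have 1: "of_nat c * a - of_nat c * b = of_nat c * (a - b)" by (simp add: right_diff_distrib)
    have 2: "of_nat (c * g) * z = of_nat c * (of_nat g * z)" by simp
    have 3: "(of_nat c * (a - b) = of_nat c * (of_nat g * z)) = (a - b = of_nat g * z)"
      using c by (subst mult_left_cancel) auto
    show ?thesis unfolding 1 2 3 ..
  qed
  show ?thesis unfolding zc_def e ..
qed

lemma zc_int: assumes "coprime m d"
  shows "zc d m (of_int a) (of_int b) \<longleftrightarrow> [a = b] (mod int m)"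
proof
  assume "[a = b] (mod int m)"
  then obtain t where "a - b = int m * t" by (metis cong_iff_dvd_diff dvdE cong_sym_eq)
  then have "(of_int a :: rat) - of_int b = of_nat m * of_int t"
    by (metis of_int_diff of_int_mult of_int_of_nat_eq)
  thus "zc d m (of_int a) (of_int b)" unfolding zc_def by (intro bexI[of _ "of_int t"]) auto
next
  assume "zc d m (of_int a) (of_int b)"
  then obtain q p where "(of_int a :: rat) - of_int b = of_nat m * (of_int q / of_nat d ^ p)"
    unfolding zc_def Zd_def by blast
  then have "(of_int a - of_int b) * (of_nat d ^ p) = (of_nat m * of_int q :: rat)"
    using Dnz by (simp add: field_simps)
  then have "of_int ((a - b) * int d ^ p) = (of_int (int m * q) :: rat)" by simp
  then have e: "(a - b) * int d ^ p = int m * q" using of_int_eq_iff by blast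
  have "int m dvd (a - b) * int d ^ p" unfolding e by simp
  moreover have "coprime (int m) (int d ^ p)" using assms by simp
  ultimately have "int m dvd (a - b)" using coprime_dvd_mult_left_iff by blast
  thus "[a = b] (mod int m)" by (simp add: cong_iff_dvd_diff)
qed

lemma zc_nat: assumes "coprime m d"
  shows "zc d m (of_nat a) (of_nat b) \<longleftrightarrow> [a = b] (mod m)"
  using zc_int[OF assms, of "int a" "int b"] by (simp add: cong_int_iff)

lemma zc_rep: assumes "y \<in> Zd d" "coprime m d" "m > 0"
  shows "\<exists>r<m. zc d m y (of_nat r)"
proof -
  obtain q p where y: "y = of_int q / of_nat d ^ p" using assms(1) unfolding Zd_def by blast
  have "coprime (int d ^ p) (int m)" using assms(2) by (simp add: coprime_commute)
  then obtain u where u: "[int d ^ p * u = 1] (mod int m)"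
    using cong_solve_coprime_int by blast
  define r where "r = nat ((q * u) mod int m)"
  have rm: "r < m" unfolding r_def using assms(3)
    by (simp add: nat_less_iff)
  have r_eq: "int r = (q * u) mod int m" unfolding r_def using assms(3) by simp
  have c1: "zc d m (of_int (int d ^ p * (q * u))) (of_int q)"
  proof -
    have "[int d ^ p * u * q = 1 * q] (mod int m)" using u by (rule cong_mult) simp
    then have "[int d ^ p * (q * u) = q] (mod int m)" by (simp add: ac_simps)
    thus ?thesis using zc_int[OF assms(2)] by blast
  qed
  have c2: "zc d m (of_int (q * u)) (of_nat r)"
  proof -
    have "[q * u = int r] (mod int m)" using r_eq by (simp add: cong_def)
    then have "zc d m (of_int (q * u)) (of_int (int r))" using zc_int[OF assms(2)] by blast
    thus ?thesis by (metis of_int_of_nat_eq)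
  qed
  have "zc d m (1 / of_nat d ^ p * of_int (int d ^ p * (q * u))) (1 / of_nat d ^ p * of_int q)"
    by (rule zc_mult[OF _ c1]) simp
  moreover have "1 / of_nat d ^ p * of_int (int d ^ p * (q * u)) = (of_int (q * u) :: rat)"
    using Dnz by simp
  moreover have "1 / of_nat d ^ p * of_int q = y" by (simp add: y)
  ultimately have "zc d m (of_int (q * u)) y" by simp
  then have "zc d m y (of_int (q * u))" by (rule zc_sym)
  thus ?thesis using zc_trans[OF _ c2] rm by blast
qed

end

context fixes d :: nat assumes d1: "d > 1" begin

abbreviation "DD \<equiv> (of_nat d :: rat)"

lemmas Zadd_b2 = Zd_add[OF d1] and Zmult_b2 = Zd_mult[OF d1] and Zuminus_b2 = Zd_uminus[OF d1]
  and Zdiff_b2 = Zd_diff[OF d1] and Zpowi_b2 = Zd_powi[OF d1] and Zpow_b2 = Zd_pow[OF d1]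
  and Z0_b2 = Zd_0[OF d1] and Z1_b2 = Zd_1[OF d1] and Zint_b2 = Zd_int[OF d1] and Znat_b2 = Zd_nat[OF d1]
lemmas zrefl_b2 = zc_refl[OF d1] and zsym_b2 = zc_sym[OF d1] and ztrans_b2 = zc_trans[OF d1]
  and zadd_b2 = zc_add[OF d1] and zneg_b2 = zc_neg[OF d1] and zdiff_b2 = zc_diff[OF d1]
  and zmult_b2 = zc_mult[OF d1] and z0iff_b2 = zc_0_iff[OF d1] and zdvd_b2 = zc_dvd[OF d1]
  and zscale_b2 = zc_scale[OF d1] and zint_b2 = zc_int[OF d1] and znat_b2 = zc_nat[OF d1]
  and zrep_b2 = zc_rep[OF d1]
declare Zpowi_b2[simp] Zpow_b2[simp] Z0_b2[simp] Z1_b2[simp] Zint_b2[simp] Znat_b2[simp] zrefl_b2[simp]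

lemma MM_carrier[simp]: "carrier (MM d) = Zd d \<times> UNIV" by (simp add: MM_def)
lemma MM_mult[simp]: "(y, l) \<otimes>\<^bsub>MM d\<^esub> (y', l') = (y + DD powi l * y', l + l')" by (simp add: MM_def)
lemma MM_one[simp]: "\<one>\<^bsub>MM d\<^esub> = (0, 0)" by (simp add: MM_def)

lemma powi_add: "DD powi (a + b) = DD powi a * DD powi b"
  using Dnz[OF d1] by (simp add: power_int_add)

lemma powi_nz: "DD powi a \<noteq> 0" using Dnz[OF d1] by (simp add: power_int_not_zero)

lemma MM_group: "group (MM d)"
proof (rule groupI)
  fix x y assume "x \<in> carrier (MM d)" "y \<in> carrier (MM d)"
  thus "x \<otimes>\<^bsub>MM d\<^esub> y \<in> carrier (MM d)"
    by (cases x, cases y) (auto intro!: Zadd_b2 Zmult_b2)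
next
  show "\<one>\<^bsub>MM d\<^esub> \<in> carrier (MM d)" by simp
next
  fix x y z assume "x \<in> carrier (MM d)" "y \<in> carrier (MM d)" "z \<in> carrier (MM d)"
  thus "x \<otimes>\<^bsub>MM d\<^esub> y \<otimes>\<^bsub>MM d\<^esub> z = x \<otimes>\<^bsub>MM d\<^esub> (y \<otimes>\<^bsub>MM d\<^esub> z)"
    by (cases x, cases y, cases z) (simp add: powi_add algebra_simps)
next
  fix x assume "x \<in> carrier (MM d)"
  thus "\<one>\<^bsub>MM d\<^esub> \<otimes>\<^bsub>MM d\<^esub> x = x" by (cases x) simp
next
  fix x assume x: "x \<in> carrier (MM d)"
  obtain y l where xe: "x = (y, l)" by (cases x)
  have y: "y \<in> Zd d" using x xe by simp
  have "(- (DD powi (- l) * y), - l) \<in> carrier (MM d)"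
    using y by (auto intro!: Zuminus_b2 Zmult_b2)
  moreover have "(- (DD powi (- l) * y), - l) \<otimes>\<^bsub>MM d\<^esub> x = \<one>\<^bsub>MM d\<^esub>"
    by (simp add: xe)
  ultimately show "\<exists>y\<in>carrier (MM d). y \<otimes>\<^bsub>MM d\<^esub> x = \<one>\<^bsub>MM d\<^esub>" by blast
qed

lemma MM_inv[simp]: "y \<in> Zd d \<Longrightarrow> inv\<^bsub>MM d\<^esub> (y, l) = (- (DD powi (- l) * y), - l)"
proof -
  assume y: "y \<in> Zd d"
  interpret group "MM d" by (rule MM_group)
  show ?thesis
    by (rule inv_equality) (use y in \<open>auto intro!: Zuminus_b2 Zmult_b2\<close>)
qed

lemma MM_mult_inv: "y' \<in> Zd d \<Longrightarrow>
   (y, l) \<otimes>\<^bsub>MM d\<^esub> inv\<^bsub>MM d\<^esub> (y', l') = (y - DD powi (l - l') * y', l - l')"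
  by (simp add: powi_add[symmetric])

definition cc :: "nat \<Rightarrow> rat \<Rightarrow> int \<Rightarrow> rat" where
  "cc k x l = x * (DD powi l - 1) / (DD ^ k - 1)"

definition Hsub :: "nat \<Rightarrow> nat \<Rightarrow> rat \<Rightarrow> (rat \<times> int) set" where
  "Hsub k m x = {(y, l). y \<in> Zd d \<and> int k dvd l \<and> zc d m y (cc k x l)}"

lemma Dk1: "k \<ge> 1 \<Longrightarrow> DD ^ k - 1 \<noteq> 0"
proof -
  assume "k \<ge> 1"
  have "1 < DD" using d1 by simp
  then have "1 < DD ^ k" using \<open>k \<ge> 1\<close> by (simp add: one_less_power)
  thus ?thesis by simp
qed

lemma cc_add: "k \<ge> 1 \<Longrightarrow> cc k x (l + l') = cc k x l + DD powi l * cc k x l'"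
proof -
  have "cc k x l + DD powi l * cc k x l' = (x * (DD powi l - 1) + DD powi l * (x * (DD powi l' - 1))) / (DD ^ k - 1)"
    unfolding cc_def by (simp add: add_divide_distrib)
  also have "x * (DD powi l - 1) + DD powi l * (x * (DD powi l' - 1)) = x * (DD powi (l + l') - 1)"
    by (simp add: powi_add algebra_simps)
  finally show ?thesis by (simp add: cc_def)
qed

lemma cc_neg: "k \<ge> 1 \<Longrightarrow> cc k x (- l) = - (DD powi (- l) * cc k x l)"
proof -
  assume k: "k \<ge> 1"
  have "DD powi (- l) * DD powi l = 1" using powi_add[of "-l" l] by simp
  then show ?thesis unfolding cc_def using Dk1[OF k] by (simp add: field_simps)
qed

lemma cc_0[simp]: "cc k x 0 = 0" by (simp add: cc_def)

lemma cc_k: "k \<ge> 1 \<Longrightarrow> cc k x (int k) = x"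
  unfolding cc_def using Dk1[of k] by simp

lemma geo_Zd_aux: "k \<ge> 1 \<Longrightarrow> (DD powi (int k * q) - 1) / (DD ^ k - 1) \<in> Zd d"
proof -
  assume k: "k \<ge> 1"
  define E where "E = DD ^ k"
  have E1: "E - 1 \<noteq> 0" using Dk1[OF k] E_def by simp
  have pq: "DD powi (int k * q) = E powi q" for q by (simp add: E_def power_int_mult)
  have Einv: "E powi (-1) \<in> Zd d"
  proof -
    have "E powi (-1) = DD powi (- int k)" by (simp add: E_def power_int_minus)
    thus ?thesis by simp
  qed
  have EZ: "E \<in> Zd d" unfolding E_def by simp
  have Enz: "E \<noteq> 0" using E1 Dnz[OF d1] by (simp add: E_def)
  have "(E powi q - 1) / (E - 1) \<in> Zd d" for q
  proof (induct q rule: int_induct[where k=0])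
    case base show ?case by simp
  next
    case (step1 i)
    have "E powi (i + 1) = E powi i * E" using Enz by (simp add: power_int_add)
    then have eq: "(E powi (i + 1) - 1) / (E - 1) = E * ((E powi i - 1) / (E - 1)) + 1"
      using E1 by (simp add: field_simps)
    show ?case unfolding eq by (intro Zadd_b2 Zmult_b2 EZ step1(2) Z1_b2)
  next
    case (step2 i)
    have "E powi (i - 1) = E powi (i + (-1))" by simp
    also have "\<dots> = E powi i * E powi (-1)" using Enz by (rule power_int_add[OF disjI1])
    finally have "E powi (i - 1) = E powi i * E powi (-1)" .
    moreover have "E powi (-1) * E = 1" using Enz by (simp add: power_int_minus field_simps)
    ultimately have eq: "(E powi (i - 1) - 1) / (E - 1) = E powi (-1) * ((E powi i - 1) / (E - 1)) - E powi (-1)"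
    proof -
      assume a1: "E powi (i - 1) = E powi i * E powi (-1)" and a2: "E powi (-1) * E = 1"
      define F where "F = E powi (-1)"
      define P where "P = E powi i"
      have FE: "F * E = 1" using a2 F_def by simp
      have "F * ((P - 1) / (E - 1)) - F = (F * (P - 1) - F * (E - 1)) / (E - 1)"
        using E1 by (simp add: field_simps)
      also have "F * (P - 1) - F * (E - 1) = P * F - F * E" by (simp add: algebra_simps)
      also have "\<dots> = P * F - 1" using FE by simp
      finally show ?thesis unfolding a1 F_def[symmetric] P_def[symmetric] by simp
    qed
    show ?case unfolding eq by (intro Zdiff_b2 Zmult_b2 Einv step2(2))
  qed
  thus ?thesis unfolding pq E_def by simp
qed

lemma geo_Zd: "k \<ge> 1 \<Longrightarrow> int k dvd l \<Longrightarrow> (DD powi l - 1) / (DD ^ k - 1) \<in> Zd d"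
  using geo_Zd_aux by (auto elim!: dvdE)

lemma cc_eq: "cc k x l = x * ((DD powi l - 1) / (DD ^ k - 1))" by (simp add: cc_def)

lemma cc_Zd: "k \<ge> 1 \<Longrightarrow> int k dvd l \<Longrightarrow> x \<in> Zd d \<Longrightarrow> cc k x l \<in> Zd d"
  unfolding cc_eq by (intro Zmult_b2 geo_Zd)

lemma cc_zc: "k \<ge> 1 \<Longrightarrow> int k dvd l \<Longrightarrow> zc d m x x' \<Longrightarrow> zc d m (cc k x l) (cc k x' l)"
  unfolding cc_eq
  by (subst (1 2) mult.commute, rule zmult_b2) (auto intro: geo_Zd)

lemma Hsub_cong: assumes "k \<ge> 1" "zc d m x x'" shows "Hsub k m x = Hsub k m x'"
proof -
  have "zc d m y (cc k x l) = zc d m y (cc k x' l)" if "int k dvd l" for y l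
    using cc_zc[OF assms(1) that assms(2)] ztrans_b2 zsym_b2 by blast
  thus ?thesis unfolding Hsub_def by auto
qed

lemma Hsub_subgroup: assumes "k \<ge> 1" shows "subgroup (Hsub k m x) (MM d)"
proof -
  interpret group "MM d" by (rule MM_group)
  show ?thesis
  proof (rule subgroupI)
    show "Hsub k m x \<subseteq> carrier (MM d)" unfolding Hsub_def by auto
    have "(0, 0) \<in> Hsub k m x" unfolding Hsub_def by simp
    thus "Hsub k m x \<noteq> {}" by blast
  next
    fix a assume a: "a \<in> Hsub k m x"
    obtain y l where ae: "a = (y, l)" by (cases a)
    have y: "y \<in> Zd d" "int k dvd l" "zc d m y (cc k x l)" using a ae unfolding Hsub_def by auto
    have "zc d m (DD powi (- l) * y) (DD powi (- l) * cc k x l)"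
      by (rule zmult_b2[OF _ y(3)]) auto
    then have "zc d m (- (DD powi (- l) * y)) (- (DD powi (- l) * cc k x l))" by (rule zneg_b2)
    then have "zc d m (- (DD powi (- l) * y)) (cc k x (- l))" using cc_neg[OF assms] by simp
    moreover have "- (DD powi (- l) * y) \<in> Zd d" using y(1) by (auto intro!: Zmult_b2 Zuminus_b2)
    ultimately show "inv\<^bsub>MM d\<^esub> a \<in> Hsub k m x" using y ae unfolding Hsub_def by simp
  next
    fix a b assume a: "a \<in> Hsub k m x" and b: "b \<in> Hsub k m x"
    obtain y l where ae: "a = (y, l)" by (cases a)
    obtain y' l' where be: "b = (y', l')" by (cases b)
    have y: "y \<in> Zd d" "int k dvd l" "zc d m y (cc k x l)" using a ae unfolding Hsub_def by auto
    have y': "y' \<in> Zd d" "int k dvd l'" "zc d m y' (cc k x l')" using b be unfolding Hsub_def by auto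
    have "zc d m (y + DD powi l * y') (cc k x l + DD powi l * cc k x l')"
      by (rule zadd_b2[OF y(3)], rule zmult_b2[OF _ y'(3)]) auto
    then have "zc d m (y + DD powi l * y') (cc k x (l + l'))" using cc_add[OF assms] by simp
    moreover have "y + DD powi l * y' \<in> Zd d" using y y' by (auto intro!: Zmult_b2 Zadd_b2)
    ultimately show "a \<otimes>\<^bsub>MM d\<^esub> b \<in> Hsub k m x" using y y' ae be unfolding Hsub_def by simp
  qed
qed

end

lemma (in group) conj_set_eq: "H \<subseteq> carrier G \<Longrightarrow> g \<in> carrier G \<Longrightarrow>
  (g <# H) #> inv g = (\<lambda>h. g \<otimes> h \<otimes> inv g) ` H"
  unfolding l_coset_def r_coset_def by auto

context fixes d :: nat assumes d1: "d > 1" begin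

lemmas Zadd_b3 = Zd_add[OF d1] and Zmult_b3 = Zd_mult[OF d1] and Zuminus_b3 = Zd_uminus[OF d1]
  and Zdiff_b3 = Zd_diff[OF d1] and Zpowi_b3 = Zd_powi[OF d1] and Zpow_b3 = Zd_pow[OF d1]
  and Z0_b3 = Zd_0[OF d1] and Z1_b3 = Zd_1[OF d1] and Zint_b3 = Zd_int[OF d1] and Znat_b3 = Zd_nat[OF d1]
lemmas zrefl_b3 = zc_refl[OF d1] and zsym_b3 = zc_sym[OF d1] and ztrans_b3 = zc_trans[OF d1]
  and zadd_b3 = zc_add[OF d1] and zneg_b3 = zc_neg[OF d1] and zdiff_b3 = zc_diff[OF d1]
  and zmult_b3 = zc_mult[OF d1] and z0iff_b3 = zc_0_iff[OF d1] and zdvd_b3 = zc_dvd[OF d1]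
  and zscale_b3 = zc_scale[OF d1] and zint_b3 = zc_int[OF d1] and znat_b3 = zc_nat[OF d1]
  and zrep_b3 = zc_rep[OF d1]
declare Zpowi_b3[simp] Zpow_b3[simp] Z0_b3[simp] Z1_b3[simp] Zint_b3[simp] Znat_b3[simp] zrefl_b3[simp]
lemmas MMc_b3 = MM_carrier[OF d1] and MMm_b3 = MM_mult[OF d1] and MMo_b3 = MM_one[OF d1]
  and MMi_b3 = MM_inv[OF d1] and MMmi_b3 = MM_mult_inv[OF d1] and MMg_b3 = MM_group[OF d1]
declare MMc_b3[simp] MMm_b3[simp] MMo_b3[simp] MMi_b3[simp]
lemmas ccadd_b3 = cc_add[OF d1] and ccneg_b3 = cc_neg[OF d1] and cck_b3 = cc_k[OF d1]
  and ccZd_b3 = cc_Zd[OF d1] and cczc_b3 = cc_zc[OF d1] and Hcong_b3 = Hsub_cong[OF d1]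
  and Hsg_b3 = Hsub_subgroup[OF d1] and geo_b3 = geo_Zd[OF d1] and Dk_b3 = Dk1[OF d1]
  and padd_b3 = powi_add[OF d1] and pnz_b3 = powi_nz[OF d1] and cc0_b3 = cc_0[OF d1] and cceq_b3 = cc_eq[OF d1]
declare cc0_b3[simp]

abbreviation "DQ \<equiv> DD d"

lemma zc_swap: "zc d m (y - c) b \<Longrightarrow> zc d m (y - b) c"
  unfolding zc_def by (simp add: algebra_simps)

lemma Hsub_mem: "(y, l) \<in> Hsub d k m x \<longleftrightarrow> y \<in> Zd d \<and> int k dvd l \<and> zc d m y (cc d k x l)"
  using Hsub_def[OF d1] by simp

lemma Hsub_index:
  assumes k: "k \<ge> 1" and m: "m \<ge> 1" and cop: "coprime m d" and xZ: "x \<in> Zd d"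
  shows "finite (rcosets\<^bsub>MM d\<^esub> (Hsub d k m x)) \<and> card (rcosets\<^bsub>MM d\<^esub> (Hsub d k m x)) = k * m"
proof -
  interpret group "MM d" by (rule MMg_b3)
  let ?H = "Hsub d k m x"
  have sg: "subgroup ?H (MM d)" by (rule Hsg_b3[OF k])
  define f where "f = (\<lambda>(r::nat, j::nat). ?H #>\<^bsub>MM d\<^esub> (of_nat r, int j))"
  let ?A = "{0..<m} \<times> {0..<k}"
  have img: "f ` ?A = rcosets\<^bsub>MM d\<^esub> ?H"
  proof
    show "f ` ?A \<subseteq> rcosets\<^bsub>MM d\<^esub> ?H"
      unfolding f_def using sg by (auto intro!: rcosetsI subgroup.subset)
  next
    show "rcosets\<^bsub>MM d\<^esub> ?H \<subseteq> f ` ?A"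
    proof
      fix X assume "X \<in> rcosets\<^bsub>MM d\<^esub> ?H"
      then obtain g where g: "g \<in> carrier (MM d)" "X = ?H #>\<^bsub>MM d\<^esub> g"
        unfolding RCOSETS_def by auto
      obtain y l where ge: "g = (y, l)" by (cases g)
      have y: "y \<in> Zd d" using g ge by simp
      define j where "j = nat (l mod int k)"
      have jk: "j < k" unfolding j_def using k by (simp add: nat_less_iff)
      have jl: "int j = l mod int k" unfolding j_def using k by simp
      define s where "s = l - int j"
      have ks: "int k dvd s" unfolding s_def jl by (simp add: minus_mod_eq_mult_div)
      have cs: "cc d k x s \<in> Zd d" by (rule ccZd_b3[OF k ks xZ])
      have w: "DQ powi (- s) * (y - cc d k x s) \<in> Zd d" using y cs by (intro Zmult_b3 Zdiff_b3) auto
      obtain r where r: "r < m" "zc d m (DQ powi (- s) * (y - cc d k x s)) (of_nat r)"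
        using zrep_b3[OF w cop] m by auto
      have "zc d m (DQ powi s * (DQ powi (- s) * (y - cc d k x s))) (DQ powi s * of_nat r)"
        by (rule zmult_b3[OF _ r(2)]) simp
      moreover have "DQ powi s * (DQ powi (- s) * (y - cc d k x s)) = y - cc d k x s"
        using padd_b3[of s "-s"] by (simp add: mult.assoc[symmetric])
      ultimately have "zc d m (y - cc d k x s) (DQ powi s * of_nat r)" by simp
      then have zz: "zc d m (y - DQ powi s * of_nat r) (cc d k x s)" by (rule zc_swap)
      have "g \<otimes>\<^bsub>MM d\<^esub> inv\<^bsub>MM d\<^esub> (of_nat r, int j) = (y - DQ powi s * of_nat r, s)"
        unfolding ge s_def by (rule MMmi_b3) simp
      moreover have "(y - DQ powi s * of_nat r, s) \<in> ?H"
        unfolding Hsub_mem using y zz ks by (auto intro!: Zdiff_b3 Zmult_b3)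
      ultimately have "g \<in> ?H #>\<^bsub>MM d\<^esub> (of_nat r, int j)"
        using subgroup.rcos_module_rev[OF sg is_group _ g(1)] by simp
      then have "?H #>\<^bsub>MM d\<^esub> (of_nat r, int j) = X"
        unfolding g(2) by (intro repr_independence sg) simp_all
      thus "X \<in> f ` ?A" unfolding f_def using r(1) jk by force
    qed
  qed
  have inj: "inj_on f ?A"
  proof (rule inj_onI)
    fix a b assume a: "a \<in> ?A" and b: "b \<in> ?A" and fab: "f a = f b"
    obtain r j where ae: "a = (r, j)" by (cases a)
    obtain r' j' where be: "b = (r', j')" by (cases b)
    have eq: "?H #>\<^bsub>MM d\<^esub> (of_nat r, int j) = ?H #>\<^bsub>MM d\<^esub> (of_nat r', int j')"
      using fab unfolding f_def ae be by simp
    have "(of_nat r, int j) \<in> ?H #>\<^bsub>MM d\<^esub> (of_nat r', int j')"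
      unfolding eq[symmetric] by (rule rcos_self[OF _ sg]) simp
    then have "(of_nat r, int j) \<otimes>\<^bsub>MM d\<^esub> inv\<^bsub>MM d\<^esub> (of_nat r', int j') \<in> ?H"
      by (intro subgroup.rcos_module_imp[OF sg is_group]) simp_all
    moreover have "(of_nat r, int j) \<otimes>\<^bsub>MM d\<^esub> inv\<^bsub>MM d\<^esub> (of_nat r', int j') =
        (of_nat r - DQ powi (int j - int j') * of_nat r', int j - int j')"
      by (rule MMmi_b3) simp
    ultimately have mem: "(of_nat r - DQ powi (int j - int j') * of_nat r', int j - int j') \<in> ?H"
      by metis
    then have "int k dvd int j - int j'" unfolding Hsub_mem by simp
    then have "int j mod int k = int j' mod int k" by (rule mod_eq_dvd_iff[THEN iffD2])
    moreover have "j < k" "j' < k" using a b ae be by auto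
    ultimately have jj: "j = j'" by simp
    then have "zc d m (of_nat r - of_nat r') 0" using mem unfolding Hsub_mem by simp
    then have "zc d m (of_nat r) (of_nat r')" unfolding zc_def by simp
    then have "[r = r'] (mod m)" using znat_b3[OF cop] by blast
    moreover have "r < m" "r' < m" using a b ae be by auto
    ultimately have "r = r'" by (simp add: cong_def)
    thus "a = b" using ae be jj by simp
  qed
  have "card (rcosets\<^bsub>MM d\<^esub> ?H) = card ?A" unfolding img[symmetric] by (rule card_image[OF inj])
  moreover have "finite (rcosets\<^bsub>MM d\<^esub> ?H)" unfolding img[symmetric] by simp
  ultimately show ?thesis by simp
qed

end

context fixes d :: nat assumes d1: "d > 1" begin

lemmas Zadd_b4 = Zd_add[OF d1] and Zmult_b4 = Zd_mult[OF d1] and Zuminus_b4 = Zd_uminus[OF d1]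
  and Zdiff_b4 = Zd_diff[OF d1] and Zpowi_b4 = Zd_powi[OF d1] and Zpow_b4 = Zd_pow[OF d1]
  and Z0_b4 = Zd_0[OF d1] and Z1_b4 = Zd_1[OF d1] and Zint_b4 = Zd_int[OF d1] and Znat_b4 = Zd_nat[OF d1]
lemmas zrefl_b4 = zc_refl[OF d1] and zsym_b4 = zc_sym[OF d1] and ztrans_b4 = zc_trans[OF d1]
  and zadd_b4 = zc_add[OF d1] and zneg_b4 = zc_neg[OF d1] and zdiff_b4 = zc_diff[OF d1]
  and zmult_b4 = zc_mult[OF d1] and z0iff_b4 = zc_0_iff[OF d1] and zdvd_b4 = zc_dvd[OF d1]
  and zscale_b4 = zc_scale[OF d1] and zint_b4 = zc_int[OF d1] and znat_b4 = zc_nat[OF d1]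
  and zrep_b4 = zc_rep[OF d1]
declare Zpowi_b4[simp] Zpow_b4[simp] Z0_b4[simp] Z1_b4[simp] Zint_b4[simp] Znat_b4[simp] zrefl_b4[simp]
lemmas MMc_b4 = MM_carrier[OF d1] and MMm_b4 = MM_mult[OF d1] and MMo_b4 = MM_one[OF d1]
  and MMi_b4 = MM_inv[OF d1] and MMmi_b4 = MM_mult_inv[OF d1] and MMg_b4 = MM_group[OF d1]
declare MMc_b4[simp] MMm_b4[simp] MMo_b4[simp] MMi_b4[simp]
lemmas ccadd_b4 = cc_add[OF d1] and ccneg_b4 = cc_neg[OF d1] and cck_b4 = cc_k[OF d1]
  and ccZd_b4 = cc_Zd[OF d1] and cczc_b4 = cc_zc[OF d1] and Hcong_b4 = Hsub_cong[OF d1]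
  and Hsg_b4 = Hsub_subgroup[OF d1] and geo_b4 = geo_Zd[OF d1] and Dk_b4 = Dk1[OF d1]
  and padd_b4 = powi_add[OF d1] and pnz_b4 = powi_nz[OF d1] and cc0_b4 = cc_0[OF d1] and cceq_b4 = cc_eq[OF d1]
declare cc0_b4[simp]

abbreviation "DR \<equiv> DD d"
lemmas Hmem_b4 = Hsub_mem[OF d1] and zswap_b4 = zc_swap[OF d1] and Hidx_b4 = Hsub_index[OF d1]


lemma conj_elem:
  assumes k: "k \<ge> 1" and h: "(y, l) \<in> Hsub d k m x" and z: "z \<in> Zd d"
  shows "(z + DR powi s * y - DR powi l * z, l) \<in> Hsub d k m (DR powi s * x - (DR ^ k - 1) * z)"
proof -
  have y: "y \<in> Zd d" "int k dvd l" "zc d m y (cc d k x l)" using h unfolding Hmem_b4 by auto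
  have ce: "cc d k (DR powi s * x - (DR ^ k - 1) * z) l = DR powi s * cc d k x l - (DR powi l - 1) * z"
    unfolding cceq_b4 using Dk_b4[OF k] by (simp add: field_simps)
  have "zc d m (DR powi s * y) (DR powi s * cc d k x l)" by (rule zmult_b4[OF _ y(3)]) simp
  then have "zc d m (DR powi s * y + (z - DR powi l * z)) (DR powi s * cc d k x l + (z - DR powi l * z))"
    by (rule zadd_b4) simp
  moreover have "DR powi s * y + (z - DR powi l * z) = z + DR powi s * y - DR powi l * z" by simp
  moreover have "DR powi s * cc d k x l + (z - DR powi l * z) = DR powi s * cc d k x l - (DR powi l - 1) * z"
    by (simp add: algebra_simps)
  ultimately have "zc d m (z + DR powi s * y - DR powi l * z) (cc d k (DR powi s * x - (DR ^ k - 1) * z) l)"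
    unfolding ce by simp
  moreover have "z + DR powi s * y - DR powi l * z \<in> Zd d" using y z by (intro Zdiff_b4 Zadd_b4 Zmult_b4) auto
  ultimately show ?thesis unfolding Hmem_b4 using y by simp
qed

lemma conj_Hsub:
  assumes k: "k \<ge> 1" and g: "(z, s) \<in> carrier (MM d)"
  shows "((z, s) <#\<^bsub>MM d\<^esub> Hsub d k m x) #>\<^bsub>MM d\<^esub> inv\<^bsub>MM d\<^esub> (z, s)
         = Hsub d k m (DR powi s * x - (DR ^ k - 1) * z)"
proof -
  interpret group "MM d" by (rule MMg_b4)
  have z: "z \<in> Zd d" using g by simp
  let ?H = "Hsub d k m x" and ?H' = "Hsub d k m (DR powi s * x - (DR ^ k - 1) * z)"
  have Hc: "?H \<subseteq> carrier (MM d)" using subgroup.subset[OF Hsg_b4[OF k]] .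
  have H'c: "?H' \<subseteq> carrier (MM d)" using subgroup.subset[OF Hsg_b4[OF k]] .
  have ce: "(z, s) \<otimes>\<^bsub>MM d\<^esub> (y, l) \<otimes>\<^bsub>MM d\<^esub> inv\<^bsub>MM d\<^esub> (z, s) = (z + DR powi s * y - DR powi l * z, l)"
    if "y \<in> Zd d" for y l
  proof -
    have "DR powi (s + l) * (DR powi (- s) * z) = DR powi l * z"
      using padd_b4[of "s + l" "- s"] by (simp add: mult.assoc[symmetric])
    thus ?thesis using z by simp
  qed
  show ?thesis
  proof
    show "((z, s) <#\<^bsub>MM d\<^esub> ?H) #>\<^bsub>MM d\<^esub> inv\<^bsub>MM d\<^esub> (z, s) \<subseteq> ?H'"
    proof
      fix a assume "a \<in> ((z, s) <#\<^bsub>MM d\<^esub> ?H) #>\<^bsub>MM d\<^esub> inv\<^bsub>MM d\<^esub> (z, s)"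
      then obtain h where h: "h \<in> ?H" "a = (z, s) \<otimes>\<^bsub>MM d\<^esub> h \<otimes>\<^bsub>MM d\<^esub> inv\<^bsub>MM d\<^esub> (z, s)"
        unfolding conj_set_eq[OF Hc g] by auto
      obtain y l where he: "h = (y, l)" by (cases h)
      have yl: "(y, l) \<in> ?H" using h he by simp
      then have "y \<in> Zd d" unfolding Hmem_b4 by simp
      then have "a = (z + DR powi s * y - DR powi l * z, l)" using h(2) he ce by metis
      thus "a \<in> ?H'" using conj_elem[OF k yl z] by simp
    qed
  next
    show "?H' \<subseteq> ((z, s) <#\<^bsub>MM d\<^esub> ?H) #>\<^bsub>MM d\<^esub> inv\<^bsub>MM d\<^esub> (z, s)"
    proof
      fix a assume a: "a \<in> ?H'"
      obtain y l where ae: "a = (y, l)" by (cases a)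
      define z' where "z' = - (DR powi (- s) * z)"
      have z': "z' \<in> Zd d" unfolding z'_def using z by (intro Zuminus_b4 Zmult_b4) auto
      have x_eq: "DR powi (- s) * (DR powi s * x - (DR ^ k - 1) * z) - (DR ^ k - 1) * z' = x"
      proof -
        have "DR powi (- s) * DR powi s = 1" using padd_b4[of "-s" s] by simp
        thus ?thesis unfolding z'_def by (simp add: algebra_simps)
      qed
      have "(y, l) \<in> ?H'" using a ae by simp
      then have y: "y \<in> Zd d" unfolding Hmem_b4 by simp
      have b: "(z' + DR powi (- s) * y - DR powi l * z', l) \<in> ?H"
        using conj_elem[OF k a[unfolded ae] z', of "- s"] unfolding x_eq .
      have bb: "(z, s) \<otimes>\<^bsub>MM d\<^esub> (z' + DR powi (- s) * y - DR powi l * z', l) \<otimes>\<^bsub>MM d\<^esub> inv\<^bsub>MM d\<^esub> (z, s) = a"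
      proof -
        have "DR powi s * DR powi (- s) = 1" using padd_b4[of s "-s"] by simp
        moreover have "DR powi s * DR powi l = DR powi (s + l)" using padd_b4 by simp
        moreover have "z' + DR powi (- s) * y - DR powi l * z' \<in> Zd d"
          using y z' by (intro Zdiff_b4 Zadd_b4 Zmult_b4) auto
        ultimately show ?thesis unfolding ce[OF \<open>z' + DR powi (- s) * y - DR powi l * z' \<in> Zd d\<close>]
          unfolding ae z'_def by (simp add: algebra_simps)
      qed
      show "a \<in> ((z, s) <#\<^bsub>MM d\<^esub> ?H) #>\<^bsub>MM d\<^esub> inv\<^bsub>MM d\<^esub> (z, s)"
        unfolding conj_set_eq[OF Hc g] using b bb by (metis image_eqI)
    qed
  qed
qed

lemma Hsub_unique:
  assumes k: "k \<ge> 1" and k': "k' \<ge> 1" and cop: "coprime m d" and cop': "coprime m' d"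
    and x: "x \<in> Zd d" and x': "x' \<in> Zd d" and eq: "Hsub d k m x = Hsub d k' m' x'"
  shows "k = k' \<and> m = m' \<and> zc d m x x'"
proof -
  have "(x, int k) \<in> Hsub d k m x" unfolding Hmem_b4 using x cck_b4[OF k] by simp
  then have 1: "(x, int k) \<in> Hsub d k' m' x'" using eq by simp
  have "(x', int k') \<in> Hsub d k' m' x'" unfolding Hmem_b4 using x' cck_b4[OF k'] by simp
  then have 2: "(x', int k') \<in> Hsub d k m x" using eq by simp
  have "int k' dvd int k" "int k dvd int k'" using 1 2 unfolding Hmem_b4 by auto
  then have kk: "k = k'" by (simp add: dvd_antisym)
  have "(of_nat m, 0) \<in> Hsub d k m x" unfolding Hmem_b4 zc_def by (intro conjI, simp, simp, rule bexI[of _ 1]) simp_all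
  then have "(of_nat m, 0) \<in> Hsub d k' m' x'" using eq by simp
  then have "zc d m' (of_nat m) (of_nat 0)" unfolding Hmem_b4 by simp
  then have "[m = 0] (mod m')" using znat_b4[OF cop'] by blast
  then have a: "m' dvd m" by (simp add: cong_0_iff)
  have "(of_nat m', 0) \<in> Hsub d k' m' x'" unfolding Hmem_b4 zc_def by (intro conjI, simp, simp, rule bexI[of _ 1]) simp_all
  then have "(of_nat m', 0) \<in> Hsub d k m x" using eq by simp
  then have "zc d m (of_nat m') (of_nat 0)" unfolding Hmem_b4 by simp
  then have "[m' = 0] (mod m)" using znat_b4[OF cop] by blast
  then have b: "m dvd m'" by (simp add: cong_0_iff)
  have mm: "m = m'" using a b by (simp add: dvd_antisym)
  have "zc d m x (cc d k x' (int k))" using 1 kk mm unfolding Hmem_b4 by simp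
  then have "zc d m x x'" using cck_b4[OF k] by simp
  thus ?thesis using kk mm by simp
qed

end

lemma (in group) pow_in_subgroup:
  assumes H: "subgroup H G" and fin: "finite (rcosets H)" and g: "g \<in> carrier G"
  shows "\<exists>j::nat. j \<ge> 1 \<and> g [^] j \<in> H"
proof -
  define f where "f = (\<lambda>j::nat. H #> g [^] j)"
  have "f ` UNIV \<subseteq> rcosets H" unfolding f_def using g subgroup.subset[OF H] by (auto intro!: rcosetsI)
  then have "finite (f ` UNIV)" using fin finite_subset by blast
  then have "\<not> inj f" using finite_imageD infinite_UNIV_nat by blast
  then obtain i j where ij: "f i = f j" "i \<noteq> j" unfolding inj_def by blast
  have "\<exists>i j. i < j \<and> f i = f j" using ij by (metis linorder_neqE_nat)
  then obtain i j where ij: "i < j" "f i = f j" by blast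
  have "g [^] j \<in> H #> g [^] i" using ij(2) unfolding f_def
    by (metis H g nat_pow_closed rcos_self)
  then have "g [^] j \<otimes> inv (g [^] i) \<in> H"
    by (intro subgroup.rcos_module_imp[OF H is_group]) (use g in auto)
  moreover have "g [^] j = g [^] (j - i) \<otimes> g [^] i" using ij(1) nat_pow_mult[OF g, of "j - i" i] by simp
  ultimately have "g [^] (j - i) \<in> H" using g by (simp add: m_assoc)
  thus ?thesis using ij(1) by (intro exI[of _ "j - i"]) simp
qed

context fixes d :: nat assumes d1: "d > 1" begin

lemmas Zadd_b5 = Zd_add[OF d1] and Zmult_b5 = Zd_mult[OF d1] and Zuminus_b5 = Zd_uminus[OF d1]
  and Zdiff_b5 = Zd_diff[OF d1] and Zpowi_b5 = Zd_powi[OF d1] and Zpow_b5 = Zd_pow[OF d1]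
  and Z0_b5 = Zd_0[OF d1] and Z1_b5 = Zd_1[OF d1] and Zint_b5 = Zd_int[OF d1] and Znat_b5 = Zd_nat[OF d1]
lemmas zrefl_b5 = zc_refl[OF d1] and zsym_b5 = zc_sym[OF d1] and ztrans_b5 = zc_trans[OF d1]
  and zadd_b5 = zc_add[OF d1] and zneg_b5 = zc_neg[OF d1] and zdiff_b5 = zc_diff[OF d1]
  and zmult_b5 = zc_mult[OF d1] and z0iff_b5 = zc_0_iff[OF d1] and zdvd_b5 = zc_dvd[OF d1]
  and zscale_b5 = zc_scale[OF d1] and zint_b5 = zc_int[OF d1] and znat_b5 = zc_nat[OF d1]
  and zrep_b5 = zc_rep[OF d1]
declare Zpowi_b5[simp] Zpow_b5[simp] Z0_b5[simp] Z1_b5[simp] Zint_b5[simp] Znat_b5[simp] zrefl_b5[simp]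
lemmas MMc_b5 = MM_carrier[OF d1] and MMm_b5 = MM_mult[OF d1] and MMo_b5 = MM_one[OF d1]
  and MMi_b5 = MM_inv[OF d1] and MMmi_b5 = MM_mult_inv[OF d1] and MMg_b5 = MM_group[OF d1]
declare MMc_b5[simp] MMm_b5[simp] MMo_b5[simp] MMi_b5[simp]
lemmas ccadd_b5 = cc_add[OF d1] and ccneg_b5 = cc_neg[OF d1] and cck_b5 = cc_k[OF d1]
  and ccZd_b5 = cc_Zd[OF d1] and cczc_b5 = cc_zc[OF d1] and Hcong_b5 = Hsub_cong[OF d1]
  and Hsg_b5 = Hsub_subgroup[OF d1] and geo_b5 = geo_Zd[OF d1] and Dk_b5 = Dk1[OF d1]
  and padd_b5 = powi_add[OF d1] and pnz_b5 = powi_nz[OF d1] and cc0_b5 = cc_0[OF d1] and cceq_b5 = cc_eq[OF d1]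
declare cc0_b5[simp]

abbreviation "DS \<equiv> DD d"
lemmas Hmem_b5 = Hsub_mem[OF d1] and zswap_b5 = zc_swap[OF d1] and Hidx_b5 = Hsub_index[OF d1]
lemmas conjH_b5 = conj_Hsub[OF d1] and Huniq_b5 = Hsub_unique[OF d1] and conjE'_b5 = conj_elem[OF d1]



lemma MM_conj: "z \<in> Zd d \<Longrightarrow> (z, s) \<otimes>\<^bsub>MM d\<^esub> (y, l) \<otimes>\<^bsub>MM d\<^esub> inv\<^bsub>MM d\<^esub> (z, s) = (z + DS powi s * y - DS powi l * z, l)"
proof -
  assume z: "z \<in> Zd d"
  have "DS powi (s + l) * (DS powi (- s) * z) = DS powi l * z"
    using padd_b5[of "s + l" "- s"] by (simp add: mult.assoc[symmetric])
  thus ?thesis using z by simp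
qed

lemma MM_pow_a: "(0, 1) [^]\<^bsub>MM d\<^esub> (j::nat) = (0, int j)"
proof -
  interpret group "MM d" by (rule MMg_b5)
  show ?thesis by (induct j) simp_all
qed

lemma MM_pow_b: "(1, 0) [^]\<^bsub>MM d\<^esub> (j::nat) = (of_nat j, 0)"
proof -
  interpret group "MM d" by (rule MMg_b5)
  show ?thesis by (induct j) simp_all
qed

lemma classify:
  assumes H: "subgroup H (MM d)" and fin: "finite (rcosets\<^bsub>MM d\<^esub> H)"
  shows "\<exists>k m x. k \<ge> 1 \<and> m \<ge> 1 \<and> coprime m d \<and> x < m \<and> H = Hsub d k m (of_nat x)"
proof -
  interpret group "MM d" by (rule MMg_b5)
  have Hc: "\<And>y l. (y, l) \<in> H \<Longrightarrow> y \<in> Zd d" using subgroup.subset[OF H] by auto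
  have Hm: "\<And>a b. a \<in> H \<Longrightarrow> b \<in> H \<Longrightarrow> a \<otimes>\<^bsub>MM d\<^esub> b \<in> H" using subgroup.m_closed[OF H] .
  have Hi: "\<And>a. a \<in> H \<Longrightarrow> inv\<^bsub>MM d\<^esub> a \<in> H" using subgroup.m_inv_closed[OF H] .
  have H1: "(0, 0) \<in> H" using subgroup.one_closed[OF H] by simp
  obtain ja where ja: "ja \<ge> 1" "(0, int ja) \<in> H"
    using pow_in_subgroup[OF H fin, of "(0, 1)"] MM_pow_a by auto
  obtain jb where jb: "jb \<ge> 1" "(of_nat jb, 0) \<in> H"
    using pow_in_subgroup[OF H fin, of "(1, 0)"] MM_pow_b by auto
  define k where "k = (LEAST k. k > 0 \<and> (\<exists>y. (y, int k) \<in> H))"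
  have kex: "\<exists>k. k > 0 \<and> (\<exists>y. (y, int k) \<in> H)" using ja by (intro exI[of _ ja]) auto
  have k: "k > 0" "\<exists>y. (y, int k) \<in> H" using LeastI_ex[OF kex] unfolding k_def[symmetric] by auto
  have kmin: "\<And>k'. 0 < k' \<Longrightarrow> k' < k \<Longrightarrow> (y, int k') \<notin> H" for y
    unfolding k_def using not_less_Least by blast
  obtain y0 where y0: "(y0, int k) \<in> H" using k by blast
  have y0Z: "y0 \<in> Zd d" using Hc[OF y0] .
  have k1: "k \<ge> 1" using k by simp
  have E: "(cc d k y0 (int k * q), int k * q) \<in> H" for q
  proof (induct q rule: int_induct[where k=0])
    case base show ?case using H1 by simp
  next
    case (step1 i)
    have "(cc d k y0 (int k * i), int k * i) \<otimes>\<^bsub>MM d\<^esub> (y0, int k) = (cc d k y0 (int k * (i + 1)), int k * (i + 1))"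
      using ccadd_b5[OF k1, of y0 "int k * i" "int k"] cck_b5[OF k1] by (simp add: algebra_simps)
    thus ?case using Hm[OF step1(2) y0] by simp
  next
    case (step2 i)
    have "cc d k y0 (int k * i) = cc d k y0 (int k * (i - 1) + int k)" by (simp add: algebra_simps)
    also have "\<dots> = cc d k y0 (int k * (i - 1)) + DS powi (int k * (i - 1)) * y0"
      using ccadd_b5[OF k1] cck_b5[OF k1] by simp
    finally have "(cc d k y0 (int k * i), int k * i) \<otimes>\<^bsub>MM d\<^esub> inv\<^bsub>MM d\<^esub> (y0, int k) = (cc d k y0 (int k * (i - 1)), int k * (i - 1))"
      using MMmi_b5[OF y0Z, of "cc d k y0 (int k * i)" "int k * i" "int k"] by (simp add: algebra_simps)
    thus ?case using Hm[OF step2(2) Hi[OF y0]] by simp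
  qed
  have kdvd: "int k dvd l" if yl: "(y, l) \<in> H" for y l
  proof (rule ccontr)
    assume nd: "\<not> int k dvd l"
    define q where "q = l div int k"
    have "(y, l) \<otimes>\<^bsub>MM d\<^esub> inv\<^bsub>MM d\<^esub> (cc d k y0 (int k * q), int k * q) \<in> H"
      using Hm[OF yl Hi[OF E[of q]]] .
    moreover have "cc d k y0 (int k * q) \<in> Zd d" by (rule ccZd_b5[OF k1 _ y0Z]) simp
    ultimately have "(y - DS powi (l - int k * q) * cc d k y0 (int k * q), l - int k * q) \<in> H"
      using MMmi_b5 by metis
    moreover have "l - int k * q = l mod int k" unfolding q_def by (simp add: minus_div_mult_eq_mod[symmetric] algebra_simps)
    ultimately have mem: "(y - DS powi (l - int k * q) * cc d k y0 (int k * q), int (nat (l mod int k))) \<in> H"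
      using k by simp
    have "l mod int k \<ge> 0" "l mod int k < int k" using k by simp_all
    moreover have "l mod int k \<noteq> 0" using nd by (simp add: dvd_eq_mod_eq_0)
    ultimately have "0 < nat (l mod int k)" "nat (l mod int k) < k" by (simp_all add: nat_less_iff)
    thus False using kmin mem by blast
  qed
  have Hinv0: "(y, 0) \<in> H \<Longrightarrow> (- y, 0) \<in> H" for y
    using Hi[of "(y, 0)"] Hc[of y 0] by simp
  have Hadd0: "(y, 0) \<in> H \<Longrightarrow> (y', 0) \<in> H \<Longrightarrow> (y + y', 0) \<in> H" for y y'
    using Hm[of "(y, 0)" "(y', 0)"] by simp
  define m where "m = (LEAST m. m > 0 \<and> (of_nat m, 0) \<in> H)"
  have mex: "\<exists>m. m > 0 \<and> (of_nat m, 0) \<in> H" using jb by (intro exI[of _ jb]) auto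
  have m: "m > 0" "(of_nat m, 0) \<in> H" using LeastI_ex[OF mex] unfolding m_def[symmetric] by auto
  have mmin: "\<And>m'. 0 < m' \<Longrightarrow> m' < m \<Longrightarrow> (of_nat m', 0) \<notin> H"
    unfolding m_def using not_less_Least by blast
  have shift: "(DS powi (int k * q) * y, 0) \<in> H" if "(y, 0) \<in> H" for y q
  proof -
    have "(cc d k y0 (int k * q), int k * q) \<otimes>\<^bsub>MM d\<^esub> (y, 0) \<otimes>\<^bsub>MM d\<^esub> inv\<^bsub>MM d\<^esub> (cc d k y0 (int k * q), int k * q) \<in> H"
      using Hm[OF Hm[OF E that] Hi[OF E]] .
    moreover have cZ: "cc d k y0 (int k * q) \<in> Zd d" by (rule ccZd_b5[OF k1 _ y0Z]) simp
    ultimately show ?thesis unfolding MM_conj[OF cZ] by simp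
  qed
  have mult: "(of_int t * of_nat m, 0) \<in> H" for t
  proof (induct t rule: int_induct[where k=0])
    case base show ?case using H1 by simp
  next
    case (step1 i) thus ?case using Hadd0[OF step1(2) m(2)] by (simp add: algebra_simps)
  next
    case (step2 i) thus ?case using Hadd0[OF step2(2) Hinv0[OF m(2)]] by (simp add: algebra_simps)
  qed
  have full: "(of_nat m * w, 0) \<in> H" if w: "w \<in> Zd d" for w
  proof -
    obtain q p where wq: "w = of_int q / DS ^ p" using w unfolding Zd_def by blast
    have "(DS powi (int k * (- int p)) * (of_int (q * int d ^ (k * p - p)) * of_nat m), 0) \<in> H"
      by (rule shift[OF mult])
    moreover have "DS powi (int k * (- int p)) * (of_int (q * int d ^ (k * p - p)) * of_nat m) = of_nat m * w"
    proof -
      have kp: "k * p - p + p = k * p" using k1 by (simp add: mult_le_cancel2 trans_le_add1)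
      have "DS ^ (k * p - p) * DS ^ p = DS ^ (k * p)" using kp by (metis power_add)
      moreover have "DS powi (int k * (- int p)) = 1 / DS ^ (k * p)"
      proof -
        have "DS powi (int k * (- int p)) = DS powi (- int (k * p))" by simp
        also have "\<dots> = inverse (DS ^ (k * p))" by (simp only: power_int_minus power_int_of_nat)
        finally show ?thesis by (simp add: inverse_eq_divide)
      qed
      ultimately have RQ: "DS powi (int k * (- int p)) * DS ^ (k * p - p) = 1 / DS ^ p"
      proof -
        assume a1: "DS ^ (k * p - p) * DS ^ p = DS ^ (k * p)" and a2: "DS powi (int k * (- int p)) = 1 / DS ^ (k * p)"
        have "DS powi (int k * (- int p)) = 1 / (DS ^ (k * p - p) * DS ^ p)" unfolding a2 a1 ..
        thus ?thesis using Dnz[OF d1] by simp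
      qed
      have "of_int (q * int d ^ (k * p - p)) = of_int q * DS ^ (k * p - p)" by simp
      then have "DS powi (int k * (- int p)) * (of_int (q * int d ^ (k * p - p)) * of_nat m)
         = (DS powi (int k * (- int p)) * DS ^ (k * p - p)) * (of_int q * of_nat m)"
        by (simp only: ac_simps)
      also have "\<dots> = of_nat m * w" unfolding RQ wq by simp
      finally show ?thesis .
    qed
    ultimately show ?thesis by metis
  qed
  have intdvd: "int m dvd z" if "(of_int z, 0) \<in> H" for z
  proof (rule ccontr)
    assume nd: "\<not> int m dvd z"
    have "(of_int z + - (of_int (z div int m) * of_nat m), 0) \<in> H"
      using Hadd0[OF that Hinv0[OF mult]] .
    moreover have "of_int z + - (of_int (z div int m) * of_nat m) = (of_nat (nat (z mod int m)) :: rat)"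
    proof -
      have "z mod int m = z - z div int m * int m" by (simp add: minus_div_mult_eq_mod[symmetric])
      moreover have "z mod int m \<ge> 0" using m by simp
      ultimately show ?thesis by simp
    qed
    ultimately have "(of_nat (nat (z mod int m)), 0) \<in> H" by simp
    moreover have "0 < nat (z mod int m)" "nat (z mod int m) < m"
    proof -
      have "z mod int m \<ge> 0" "z mod int m < int m" using m by simp_all
      moreover have "z mod int m \<noteq> 0" using nd by (simp add: dvd_eq_mod_eq_0)
      ultimately show "0 < nat (z mod int m)" "nat (z mod int m) < m" by (simp_all add: nat_less_iff)
    qed
    ultimately show False using mmin by blast
  qed
  have cop: "coprime m d"
  proof (rule ccontr)
    assume nc: "\<not> coprime m d"
    define g where "g = gcd m d"
    have g1: "g > 1" using nc m unfolding g_def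
      by (metis coprime_iff_gcd_eq_1 gcd_pos_nat less_one nat_neq_iff)
    have gm: "g dvd m" "g dvd d" unfolding g_def by auto
    define m1 where "m1 = m div g"
    define d1' where "d1' = d div g"
    have "of_nat m * (of_int (int d1') / DS ^ 1) = (of_nat m1 :: rat)"
    proof -
      have "m = m1 * g" "d = d1' * g" using gm unfolding m1_def d1'_def by auto
      thus ?thesis using Dnz[OF d1] g1 by (simp add: field_simps)
    qed
    moreover have "of_int (int d1') / DS ^ 1 \<in> Zd d" unfolding Zd_def by blast
    ultimately have "(of_nat m1, 0) \<in> H" using full by metis
    moreover have "0 < m1" "m1 < m" unfolding m1_def using g1 m gm
      by (auto simp: dvd_div_eq_0_iff)
    ultimately show False using mmin by blast
  qed
  have char: "(y, 0) \<in> H \<longleftrightarrow> zc d m y 0" if y: "y \<in> Zd d" for y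
  proof
    assume "zc d m y 0"
    then obtain w where "w \<in> Zd d" "y = of_nat m * w" unfolding z0iff_b5 by auto
    thus "(y, 0) \<in> H" using full by simp
  next
    assume yH: "(y, 0) \<in> H"
    obtain q p where yq: "y = of_int q / DS ^ p" using y unfolding Zd_def by blast
    have "(DS powi (int k * int p) * y, 0) \<in> H" by (rule shift[OF yH])
    moreover have "DS powi (int k * int p) * y = of_int (q * int d ^ (k * p - p))"
    proof -
      have kp: "k * p - p + p = k * p" using k1 by (simp add: mult_le_cancel2 trans_le_add1)
      have "DS ^ (k * p - p) * DS ^ p = DS ^ (k * p)" using kp by (metis power_add)
      moreover have "DS powi (int k * int p) = DS ^ (k * p)"
      proof -
        have "DS powi (int k * int p) = DS powi (int (k * p))" by simp
        also have "\<dots> = DS ^ (k * p)" by (rule power_int_of_nat)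
        finally show ?thesis .
      qed
      ultimately show ?thesis using Dnz[OF d1] unfolding yq by (simp add: field_simps)
    qed
    ultimately have "int m dvd q * int d ^ (k * p - p)" using intdvd by simp
    moreover have "coprime (int m) (int d ^ (k * p - p))" using cop by simp
    ultimately have "int m dvd q" using coprime_dvd_mult_left_iff by blast
    then obtain t where t: "q = int m * t" by (auto elim: dvdE)
    have "y = of_nat m * (of_int t / DS ^ p)" unfolding yq t by simp
    moreover have "of_int t / DS ^ p \<in> Zd d" unfolding Zd_def by blast
    ultimately show "zc d m y 0" unfolding z0iff_b5 by blast
  qed
  obtain x where x: "x < m" "zc d m y0 (of_nat x)" using zrep_b5[OF y0Z cop] m by auto
  have "H = Hsub d k m y0"
  proof
    show "H \<subseteq> Hsub d k m y0"
    proof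
      fix a assume a: "a \<in> H"
      obtain y l where ae: "a = (y, l)" by (cases a)
      have yl: "(y, l) \<in> H" using a ae by simp
      have yZ: "y \<in> Zd d" using Hc[OF yl] .
      obtain q where lq: "l = int k * q" using kdvd[OF yl] by (auto elim: dvdE)
      have cZ: "cc d k y0 l \<in> Zd d" by (rule ccZd_b5[OF k1 _ y0Z]) (simp add: lq)
      have "(y, l) \<otimes>\<^bsub>MM d\<^esub> inv\<^bsub>MM d\<^esub> (cc d k y0 l, l) \<in> H"
        using Hm[OF yl Hi[OF E[of q]]] lq by simp
      then have "(y - cc d k y0 l, 0) \<in> H" using MMmi_b5[OF cZ, of y l l] by simp
      then have "zc d m (y - cc d k y0 l) 0" using char yZ cZ Zdiff_b5 by blast
      then have "zc d m y (cc d k y0 l)" unfolding zc_def by simp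
      thus "a \<in> Hsub d k m y0" unfolding ae Hmem_b5 using yZ lq by simp
    qed
  next
    show "Hsub d k m y0 \<subseteq> H"
    proof
      fix a assume a: "a \<in> Hsub d k m y0"
      obtain y l where ae: "a = (y, l)" by (cases a)
      have yl: "y \<in> Zd d" "int k dvd l" "zc d m y (cc d k y0 l)" using a unfolding ae Hmem_b5 by auto
      obtain q where lq: "l = int k * q" using yl(2) by (auto elim: dvdE)
      have cZ: "cc d k y0 l \<in> Zd d" by (rule ccZd_b5[OF k1 yl(2) y0Z])
      have "zc d m (y - cc d k y0 l) 0" using yl(3) unfolding zc_def by simp
      then have "(y - cc d k y0 l, 0) \<in> H" using char yl(1) cZ Zdiff_b5 by blast
      then have "(y - cc d k y0 l, 0) \<otimes>\<^bsub>MM d\<^esub> (cc d k y0 l, l) \<in> H"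
        by (rule Hm) (use E[of q] lq in simp)
      thus "a \<in> H" unfolding ae by simp
    qed
  qed
  also have "\<dots> = Hsub d k m (of_nat x)" by (rule Hcong_b5[OF k1 x(2)])
  finally show ?thesis using k1 m cop x by (intro exI[of _ k] exI[of _ m] exI[of _ x]) simp
qed

end

lemma div_dvd_div_iff:
  fixes m a b :: nat
  assumes m: "m > 0" and a: "a dvd m" and b: "b dvd m"
  shows "(m div a dvd m div b) \<longleftrightarrow> b dvd a"
proof -
  obtain a' where a': "m = a * a'" using a by (auto elim: dvdE)
  obtain b' where b': "m = b * b'" using b by (auto elim: dvdE)
  have "0 < a * a'" "0 < b * b'" using m a' b' by auto
  then have a0: "a > 0" "a' > 0" "b > 0" "b' > 0" by (simp_all add: nat_0_less_mult_iff)
  have ma1: "m div a = a'" using a0 by (subst a') simp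
  have ma2: "m div b = b'" using a0 by (subst b') simp
  note ma = ma1 ma2
  show ?thesis unfolding ma
  proof
    assume "a' dvd b'"
    then obtain t where "b' = a' * t" by (auto elim: dvdE)
    then have "a * a' = (b * t) * a'" using a' b' by (auto simp: ac_simps)
    then have "a = b * t" using a0 by auto
    thus "b dvd a" by simp
  next
    assume "b dvd a"
    then obtain t where "a = b * t" by (auto elim: dvdE)
    then have "b * b' = b * (t * a')" using a' b' by (auto simp: ac_simps)
    then have "b' = t * a'" using a0 by auto
    thus "a' dvd b'" by simp
  qed
qed

lemma div_div_self_nat:
  assumes "a dvd (m::nat)" "m > 0" shows "m div (m div a) = a"
proof -
  obtain c where c: "m = a * c" using assms(1) by (auto elim: dvdE)
  have "0 < a * c" using c assms(2) by simp
  then have "a > 0" "c > 0" by (simp_all add: nat_0_less_mult_iff)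
  then have "m div a = c" by (subst c) simp
  thus ?thesis using \<open>a > 0\<close> \<open>c > 0\<close> by (subst c) simp
qed

context fixes d :: nat assumes d1: "d > 1" begin

lemmas Zadd_b6 = Zd_add[OF d1] and Zmult_b6 = Zd_mult[OF d1] and Zuminus_b6 = Zd_uminus[OF d1]
  and Zdiff_b6 = Zd_diff[OF d1] and Zpowi_b6 = Zd_powi[OF d1] and Zpow_b6 = Zd_pow[OF d1]
  and Z0_b6 = Zd_0[OF d1] and Z1_b6 = Zd_1[OF d1] and Zint_b6 = Zd_int[OF d1] and Znat_b6 = Zd_nat[OF d1]
lemmas zrefl_b6 = zc_refl[OF d1] and zsym_b6 = zc_sym[OF d1] and ztrans_b6 = zc_trans[OF d1]
  and zadd_b6 = zc_add[OF d1] and zneg_b6 = zc_neg[OF d1] and zdiff_b6 = zc_diff[OF d1]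
  and zmult_b6 = zc_mult[OF d1] and z0iff_b6 = zc_0_iff[OF d1] and zdvd_b6 = zc_dvd[OF d1]
  and zscale_b6 = zc_scale[OF d1] and zint_b6 = zc_int[OF d1] and znat_b6 = zc_nat[OF d1]
  and zrep_b6 = zc_rep[OF d1]
declare Zpowi_b6[simp] Zpow_b6[simp] Z0_b6[simp] Z1_b6[simp] Zint_b6[simp] Znat_b6[simp] zrefl_b6[simp]
lemmas MMc_b6 = MM_carrier[OF d1] and MMm_b6 = MM_mult[OF d1] and MMo_b6 = MM_one[OF d1]
  and MMi_b6 = MM_inv[OF d1] and MMmi_b6 = MM_mult_inv[OF d1] and MMg_b6 = MM_group[OF d1]
declare MMc_b6[simp] MMm_b6[simp] MMo_b6[simp] MMi_b6[simp]
lemmas ccadd_b6 = cc_add[OF d1] and ccneg_b6 = cc_neg[OF d1] and cck_b6 = cc_k[OF d1]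
  and ccZd_b6 = cc_Zd[OF d1] and cczc_b6 = cc_zc[OF d1] and Hcong_b6 = Hsub_cong[OF d1]
  and Hsg_b6 = Hsub_subgroup[OF d1] and geo_b6 = geo_Zd[OF d1] and Dk_b6 = Dk1[OF d1]
  and padd_b6 = powi_add[OF d1] and pnz_b6 = powi_nz[OF d1] and cc0_b6 = cc_0[OF d1] and cceq_b6 = cc_eq[OF d1]
declare cc0_b6[simp]

abbreviation "DT \<equiv> DD d"
lemmas Hmem_b6 = Hsub_mem[OF d1] and zswap_b6 = zc_swap[OF d1] and Hidx_b6 = Hsub_index[OF d1]
lemmas classif_b6 = classify[OF d1]
lemmas conjH_b6 = conj_Hsub[OF d1] and Huniq_b6 = Hsub_unique[OF d1] and conjE'_b6 = conj_elem[OF d1]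




lemma deg_dvd:
  assumes p: "(m, i) \<in> S_set d"
  shows "S_degree d (m, i) dvd n \<longleftrightarrow> m dvd n \<and> (m div gcd m (d ^ (n div m) - 1)) dvd i"
proof -
  have m0: "m > 0" and cop: "coprime m d" and im: "i < m" using p unfolding S_set_def
    by (auto simp: coprime_iff_gcd_eq_1)
  define a where "a = gcd m i"
  define b where "b = gcd m (d ^ (n div m) - 1)"
  define m' where "m' = m div a"
  have adm: "a dvd m" "b dvd m" unfolding a_def b_def by auto
  have m'm: "m' dvd m" unfolding m'_def using adm(1) by (metis dvd_div_mult_self dvd_triv_left)
  have cop': "coprime m' d" using cop m'm coprime_imp_coprime dvd_trans by blast
  have ord0: "ord m' d > 0" using cop' by simp
  have key: "m' dvd b \<longleftrightarrow> [d ^ (n div m) = 1] (mod m')"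
  proof -
    have "d ^ (n div m) \<ge> 1" using d1 by simp
    then have "[d ^ (n div m) = 1] (mod m') \<longleftrightarrow> m' dvd d ^ (n div m) - 1" by (rule cong_altdef_nat)
    also have "\<dots> \<longleftrightarrow> m' dvd b" unfolding b_def using m'm by simp
    finally show ?thesis by simp
  qed
  have cond2: "(m div b) dvd i \<longleftrightarrow> m' dvd b"
  proof -
    have "m div b * b = m" using adm(2) by simp
    then have mb: "(m div b) dvd m" by (metis dvd_triv_left)
    have "(m div b) dvd i \<longleftrightarrow> (m div b) dvd a"
      unfolding a_def using mb by (simp add: gcd_greatest_iff)
    also have "\<dots> \<longleftrightarrow> (m div b) dvd (m div m')" unfolding m'_def using div_div_self_nat[OF adm(1) m0] by simp
    also have "\<dots> \<longleftrightarrow> m' dvd b" by (rule div_dvd_div_iff[OF m0 adm(2) m'm])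
    finally show ?thesis .
  qed
  have deg: "S_degree d (m, i) = m * ord m' d" unfolding S_degree_def m'_def a_def by simp
  show ?thesis
  proof
    assume dv: "S_degree d (m, i) dvd n"
    then have mn: "m dvd n" unfolding deg using dvd_mult_left by blast
    then have "n = m * (n div m)" by simp
    then have "m * ord m' d dvd m * (n div m)" using dv unfolding deg by simp
    then have "ord m' d dvd n div m" using m0 by simp
    then have "[d ^ (n div m) = 1] (mod m')" using ord_divides by blast
    thus "m dvd n \<and> (m div gcd m (d ^ (n div m) - 1)) dvd i" using mn key cond2 unfolding b_def by simp
  next
    assume "m dvd n \<and> (m div gcd m (d ^ (n div m) - 1)) dvd i"
    then have mn: "m dvd n" and c: "m' dvd b" using cond2 unfolding b_def by auto
    then have "ord m' d dvd n div m" using key ord_divides by blast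
    then have "m * ord m' d dvd m * (n div m)" by simp
    thus "S_degree d (m, i) dvd n" unfolding deg using mn by simp
  qed
qed

end

lemma (in group) conj_equiv: "equiv {H. subgroup H G} (subgroup_conj G)"
proof (rule equivI)
  show "subgroup_conj G \<subseteq> {H. subgroup H G} \<times> {H. subgroup H G}" unfolding subgroup_conj_def by auto
next
  show "refl_on {H. subgroup H G} (subgroup_conj G)"
  proof (rule refl_onI)
    fix H assume "H \<in> {H. subgroup H G}"
    then have H: "subgroup H G" by simp
    have "(\<one> <# H) #> inv \<one> = H"
      using subgroup.subset[OF H] by (simp add: lcos_mult_one coset_mult_one)
    then have "H = (\<one> <# H) #> inv \<one>" by simp
    thus "(H, H) \<in> subgroup_conj G" unfolding subgroup_conj_def using H one_closed by blast
  qed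
next
  show "sym (subgroup_conj G)"
  proof (rule symI)
    fix H K assume "(H, K) \<in> subgroup_conj G"
    then obtain g where H: "subgroup H G" and K: "subgroup K G" and g: "g \<in> carrier G"
      and Kg: "K = (g <# H) #> inv g" unfolding subgroup_conj_def by auto
    have HK: "K = (\<lambda>h. g \<otimes> h \<otimes> inv g) ` H" using Kg conj_set_eq[OF subgroup.subset[OF H] g] by simp
    have "(inv g <# K) #> inv (inv g) = (\<lambda>h. inv g \<otimes> h \<otimes> inv (inv g)) ` K"
      using conj_set_eq[OF subgroup.subset[OF K] inv_closed[OF g]] .
    also have "\<dots> = H"
    proof -
      have "inv g \<otimes> (g \<otimes> h \<otimes> inv g) \<otimes> inv (inv g) = h" if "h \<in> H" for h
        using g subgroup.mem_carrier[OF H that] by (simp add: m_assoc[symmetric]) (simp add: m_assoc)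
      then show ?thesis unfolding HK image_image by simp
    qed
    finally have "H = (inv g <# K) #> inv (inv g)" by simp
    moreover have "inv g \<in> carrier G" using g by simp
    ultimately show "(K, H) \<in> subgroup_conj G" unfolding subgroup_conj_def using H K by blast
  qed
next
  show "trans (subgroup_conj G)"
  proof (rule transI)
    fix H K L assume "(H, K) \<in> subgroup_conj G" "(K, L) \<in> subgroup_conj G"
    then obtain g g' where H: "subgroup H G" and K: "subgroup K G" and L: "subgroup L G"
      and g: "g \<in> carrier G" and g': "g' \<in> carrier G"
      and Kg: "K = (g <# H) #> inv g" and Lg: "L = (g' <# K) #> inv g'" unfolding subgroup_conj_def by auto
    have HK: "K = (\<lambda>h. g \<otimes> h \<otimes> inv g) ` H" using Kg conj_set_eq[OF subgroup.subset[OF H] g] by simp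
    have KL: "L = (\<lambda>h. g' \<otimes> h \<otimes> inv g') ` K" using Lg conj_set_eq[OF subgroup.subset[OF K] g'] by simp
    have gg: "g' \<otimes> g \<in> carrier G" using g g' by simp
    have "((g' \<otimes> g) <# H) #> inv (g' \<otimes> g) = (\<lambda>h. (g' \<otimes> g) \<otimes> h \<otimes> inv (g' \<otimes> g)) ` H"
      using conj_set_eq[OF subgroup.subset[OF H] gg] by simp
    also have "\<dots> = L"
    proof -
      have "(g' \<otimes> g) \<otimes> h \<otimes> inv (g' \<otimes> g) = g' \<otimes> (g \<otimes> h \<otimes> inv g) \<otimes> inv g'" if "h \<in> H" for h
        using g g' subgroup.mem_carrier[OF H that] by (simp add: inv_mult_group m_assoc)
      then show ?thesis unfolding KL HK image_image by simp
    qed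
    finally have "L = ((g' \<otimes> g) <# H) #> inv (g' \<otimes> g)" by simp
    thus "(H, L) \<in> subgroup_conj G" unfolding subgroup_conj_def using H L gg by blast
  qed
qed

context fixes d :: nat assumes d1: "d > 1" begin

lemmas Zadd_b7 = Zd_add[OF d1] and Zmult_b7 = Zd_mult[OF d1] and Zuminus_b7 = Zd_uminus[OF d1]
  and Zdiff_b7 = Zd_diff[OF d1] and Zpowi_b7 = Zd_powi[OF d1] and Zpow_b7 = Zd_pow[OF d1]
  and Z0_b7 = Zd_0[OF d1] and Z1_b7 = Zd_1[OF d1] and Zint_b7 = Zd_int[OF d1] and Znat_b7 = Zd_nat[OF d1]
lemmas zrefl_b7 = zc_refl[OF d1] and zsym_b7 = zc_sym[OF d1] and ztrans_b7 = zc_trans[OF d1]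
  and zadd_b7 = zc_add[OF d1] and zneg_b7 = zc_neg[OF d1] and zdiff_b7 = zc_diff[OF d1]
  and zmult_b7 = zc_mult[OF d1] and z0iff_b7 = zc_0_iff[OF d1] and zdvd_b7 = zc_dvd[OF d1]
  and zscale_b7 = zc_scale[OF d1] and zint_b7 = zc_int[OF d1] and znat_b7 = zc_nat[OF d1]
  and zrep_b7 = zc_rep[OF d1]
declare Zpowi_b7[simp] Zpow_b7[simp] Z0_b7[simp] Z1_b7[simp] Zint_b7[simp] Znat_b7[simp] zrefl_b7[simp]
lemmas MMc_b7 = MM_carrier[OF d1] and MMm_b7 = MM_mult[OF d1] and MMo_b7 = MM_one[OF d1]
  and MMi_b7 = MM_inv[OF d1] and MMmi_b7 = MM_mult_inv[OF d1] and MMg_b7 = MM_group[OF d1]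
declare MMc_b7[simp] MMm_b7[simp] MMo_b7[simp] MMi_b7[simp]
lemmas ccadd_b7 = cc_add[OF d1] and ccneg_b7 = cc_neg[OF d1] and cck_b7 = cc_k[OF d1]
  and ccZd_b7 = cc_Zd[OF d1] and cczc_b7 = cc_zc[OF d1] and Hcong_b7 = Hsub_cong[OF d1]
  and Hsg_b7 = Hsub_subgroup[OF d1] and geo_b7 = geo_Zd[OF d1] and Dk_b7 = Dk1[OF d1]
  and padd_b7 = powi_add[OF d1] and pnz_b7 = powi_nz[OF d1] and cc0_b7 = cc_0[OF d1] and cceq_b7 = cc_eq[OF d1]
declare cc0_b7[simp]

abbreviation "DU \<equiv> DD d"
lemmas Hmem_b7 = Hsub_mem[OF d1] and zswap_b7 = zc_swap[OF d1] and Hidx_b7 = Hsub_index[OF d1]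
lemmas degdvd_b7 = deg_dvd[OF d1]
lemmas classif_b7 = classify[OF d1]
lemmas conjH_b7 = conj_Hsub[OF d1] and Huniq_b7 = Hsub_unique[OF d1] and conjE'_b7 = conj_elem[OF d1]





lemma Srel_alt:
  "((m1, i1), (m2, i2)) \<in> S_rel d \<longleftrightarrow> (m1, i1) \<in> S_set d \<and> (m2, i2) \<in> S_set d \<and> m1 = m2 \<and>
     (\<exists>s::int. zc d m1 (of_nat i1) (DU powi s * of_nat i2))"
proof -
  have main: "(\<exists>j::nat. [i1 = i2 * d ^ j] (mod m) \<or> [i2 = i1 * d ^ j] (mod m)) \<longleftrightarrow>
      (\<exists>s::int. zc d m (of_nat i1) (DU powi s * of_nat i2))" if cop: "coprime m d" for m
  proof
    assume "\<exists>j::nat. [i1 = i2 * d ^ j] (mod m) \<or> [i2 = i1 * d ^ j] (mod m)"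
    then obtain j where j: "[i1 = i2 * d ^ j] (mod m) \<or> [i2 = i1 * d ^ j] (mod m)" by blast
    thus "\<exists>s::int. zc d m (of_nat i1) (DU powi s * of_nat i2)"
    proof
      assume "[i1 = i2 * d ^ j] (mod m)"
      then have "zc d m (of_nat i1) (of_nat (i2 * d ^ j))" using znat_b7[OF cop] by blast
      then have "zc d m (of_nat i1) (DU powi (int j) * of_nat i2)" by (simp add: mult.commute)
      thus ?thesis by blast
    next
      assume "[i2 = i1 * d ^ j] (mod m)"
      then have "zc d m (of_nat i2) (of_nat (i1 * d ^ j))" using znat_b7[OF cop] by blast
      then have A: "zc d m (DU powi (- int j) * of_nat i2) (DU powi (- int j) * of_nat (i1 * d ^ j))"
        by (rule zmult_b7[rotated]) simp
      have E: "DU powi (- int j) * of_nat (i1 * d ^ j) = of_nat i1"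
      proof -
        have "DU powi (- int j) * DU ^ j = 1" using padd_b7[of "- int j" "int j"] by simp
        thus ?thesis by (simp add: algebra_simps)
      qed
      have "zc d m (DU powi (- int j) * of_nat i2) (of_nat i1)" using A unfolding E .
      then have "zc d m (of_nat i1) (DU powi (- int j) * of_nat i2)" by (rule zsym_b7)
      thus ?thesis by blast
    qed
  next
    assume "\<exists>s::int. zc d m (of_nat i1) (DU powi s * of_nat i2)"
    then obtain s where s: "zc d m (of_nat i1) (DU powi s * of_nat i2)" by blast
    show "\<exists>j::nat. [i1 = i2 * d ^ j] (mod m) \<or> [i2 = i1 * d ^ j] (mod m)"
    proof (cases "s \<ge> 0")
      case True
      then obtain j where "s = int j" using nonneg_eq_int by blast
      then have "zc d m (of_nat i1) (of_nat (i2 * d ^ j))" using s by (simp add: mult.commute)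
      then have "[i1 = i2 * d ^ j] (mod m)" using znat_b7[OF cop] by blast
      thus ?thesis by blast
    next
      case False
      then have "- s \<ge> 0" by simp
      then obtain j where "- s = int j" using nonneg_eq_int by blast
      then have sj: "s = - int j" by simp
      have A: "zc d m (DU ^ j * of_nat i1) (DU ^ j * (DU powi s * of_nat i2))" by (rule zmult_b7[OF _ s]) simp
      have E: "DU ^ j * (DU powi s * of_nat i2) = of_nat i2"
      proof -
        have "DU powi (int j) * DU powi (- int j) = 1" using padd_b7[of "int j" "- int j"] by simp
        thus ?thesis unfolding sj by (simp add: mult.assoc[symmetric])
      qed
      have "zc d m (DU ^ j * of_nat i1) (of_nat i2)" using A unfolding E .
      then have "zc d m (of_nat i2) (DU ^ j * of_nat i1)" by (rule zsym_b7)
      then have "zc d m (of_nat i2) (of_nat (i1 * d ^ j))" by (simp add: mult.commute)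
      then have "[i2 = i1 * d ^ j] (mod m)" using znat_b7[OF cop] by blast
      thus ?thesis by blast
    qed
  qed
  show ?thesis
  proof
    assume a: "((m1, i1), (m2, i2)) \<in> S_rel d"
    then have "(m1, i1) \<in> S_set d" "(m2, i2) \<in> S_set d" "m1 = m2" unfolding S_rel_def by auto
    moreover have "coprime m1 d" using \<open>(m1, i1) \<in> S_set d\<close> unfolding S_set_def by (simp add: coprime_iff_gcd_eq_1)
    ultimately show "(m1, i1) \<in> S_set d \<and> (m2, i2) \<in> S_set d \<and> m1 = m2 \<and>
     (\<exists>s::int. zc d m1 (of_nat i1) (DU powi s * of_nat i2))" using a main unfolding S_rel_def by auto
  next
    assume a: "(m1, i1) \<in> S_set d \<and> (m2, i2) \<in> S_set d \<and> m1 = m2 \<and>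
     (\<exists>s::int. zc d m1 (of_nat i1) (DU powi s * of_nat i2))"
    moreover have "coprime m1 d" using a unfolding S_set_def by (simp add: coprime_iff_gcd_eq_1)
    ultimately show "((m1, i1), (m2, i2)) \<in> S_rel d" using main unfolding S_rel_def by auto
  qed
qed

lemma exp_swap: "(\<exists>s::int. zc d m a (DU powi s * b)) \<longleftrightarrow> (\<exists>s::int. zc d m b (DU powi s * a))"
proof -
  have *: "\<exists>s::int. zc d m b (DU powi s * a)" if "zc d m a (DU powi s * b)" for a b s
  proof -
    have A: "zc d m (DU powi (- s) * a) (DU powi (- s) * (DU powi s * b))" by (rule zmult_b7[OF _ that]) simp
    have E: "DU powi (- s) * (DU powi s * b) = b"
    proof -
      have "DU powi (- s) * DU powi s = 1" using padd_b7[of "- s" s] by simp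
      thus ?thesis by (simp add: mult.assoc[symmetric])
    qed
    have "zc d m (DU powi (- s) * a) b" using A unfolding E .
    then have "zc d m b (DU powi (- s) * a)" by (rule zsym_b7)
    thus ?thesis by blast
  qed
  show ?thesis using * by blast
qed

lemma S_equiv: "equiv (S_set d) (S_rel d)"
proof (rule equivI)
  show "S_rel d \<subseteq> S_set d \<times> S_set d" unfolding S_rel_def by auto
next
  show "refl_on (S_set d) (S_rel d)"
  proof (rule refl_onI)
    fix p assume pS: "p \<in> S_set d"
    obtain m i where pe: "p = (m, i)" by (cases p)
    have "((m, i), (m, i)) \<in> S_rel d" unfolding Srel_alt using pS pe by (auto intro!: exI[of _ 0])
    thus "(p, p) \<in> S_rel d" using pe by simp
  qed
next
  show "sym (S_rel d)"
  proof (rule symI)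
    fix p q assume pq: "(p, q) \<in> S_rel d"
    obtain m i where pe: "p = (m, i)" by (cases p)
    obtain m' i' where qe: "q = (m', i')" by (cases q)
    have "((m, i), (m', i')) \<in> S_rel d" using pq pe qe by simp
    then have "((m', i'), (m, i)) \<in> S_rel d" unfolding Srel_alt using exp_swap by auto
    thus "(q, p) \<in> S_rel d" using pe qe by simp
  qed
next
  show "trans (S_rel d)"
  proof (rule transI)
    fix p q r assume pq: "(p, q) \<in> S_rel d" and qr: "(q, r) \<in> S_rel d"
    obtain m i where p: "p = (m, i)" by (cases p)
    obtain m' i' where q: "q = (m', i')" by (cases q)
    obtain m'' i'' where r: "r = (m'', i'')" by (cases r)
    obtain s t where s: "zc d m (of_nat i) (DU powi s * of_nat i')" and t: "zc d m (of_nat i') (DU powi t * of_nat i'')"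
      and mm: "m = m'" "m' = m''" and S: "(m, i) \<in> S_set d" "(m'', i'') \<in> S_set d"
      using pq qr unfolding p q r Srel_alt by blast
    have A: "zc d m (DU powi s * of_nat i') (DU powi s * (DU powi t * of_nat i''))" by (rule zmult_b7[OF _ t]) simp
    have E: "DU powi s * (DU powi t * of_nat i'') = DU powi (s + t) * of_nat i''"
      using padd_b7 by (simp add: mult.assoc)
    have "zc d m (DU powi s * of_nat i') (DU powi (s + t) * of_nat i'')" using A unfolding E .
    then have "zc d m (of_nat i) (DU powi (s + t) * of_nat i'')" using ztrans_b7[OF s] by blast
    thus "(p, r) \<in> S_rel d" unfolding p r Srel_alt using S mm by blast
  qed
qed

lemma Srel_gcd: "((m, i), (m', i')) \<in> S_rel d \<Longrightarrow> gcd m i = gcd m' i'"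
proof -
  assume a: "((m, i), (m', i')) \<in> S_rel d"
  then have mm: "m = m'" and cop: "coprime m d" and j: "\<exists>j. [i = i' * d ^ j] (mod m) \<or> [i' = i * d ^ j] (mod m)"
    unfolding S_rel_def S_set_def by (auto simp: coprime_iff_gcd_eq_1)
  then obtain j where j: "[i = i' * d ^ j] (mod m) \<or> [i' = i * d ^ j] (mod m)" by blast
  have cj: "coprime m (d ^ j)" using cop by simp
  from j show ?thesis
  proof
    assume "[i = i' * d ^ j] (mod m)"
    then have "gcd i m = gcd (i' * d ^ j) m" by (rule cong_gcd_eq)
    also have "\<dots> = gcd i' m" using gcd_mult_right_left_cancel[OF cj, of i'] by (simp add: gcd.commute mult.commute)
    finally show ?thesis using mm by (simp add: gcd.commute)
  next
    assume "[i' = i * d ^ j] (mod m)"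
    then have "gcd i' m = gcd (i * d ^ j) m" by (rule cong_gcd_eq)
    also have "\<dots> = gcd i m" using gcd_mult_right_left_cancel[OF cj, of i] by (simp add: gcd.commute mult.commute)
    finally show ?thesis using mm by (simp add: gcd.commute)
  qed
qed

lemma Srel_deg: "(p, q) \<in> S_rel d \<Longrightarrow> S_degree d p = S_degree d q"
proof -
  assume a: "(p, q) \<in> S_rel d"
  obtain m i where p: "p = (m, i)" by (cases p)
  obtain m' i' where q: "q = (m', i')" by (cases q)
  have "m = m'" using a unfolding p q S_rel_def by auto
  thus ?thesis using Srel_gcd[OF a[unfolded p q]] unfolding p q S_degree_def by simp
qed

end

definition subS :: "nat \<Rightarrow> nat \<Rightarrow> nat \<times> nat \<Rightarrow> (rat \<times> int) set" where
  "subS d n p = (case p of (m, i) \<Rightarrow>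
     Hsub d (n div m) m (of_nat (i div (m div gcd m (d ^ (n div m) - 1)))))"

context fixes d :: nat assumes d1: "d > 1" begin

lemmas Zadd_b8 = Zd_add[OF d1] and Zmult_b8 = Zd_mult[OF d1] and Zuminus_b8 = Zd_uminus[OF d1]
  and Zdiff_b8 = Zd_diff[OF d1] and Zpowi_b8 = Zd_powi[OF d1] and Zpow_b8 = Zd_pow[OF d1]
  and Z0_b8 = Zd_0[OF d1] and Z1_b8 = Zd_1[OF d1] and Zint_b8 = Zd_int[OF d1] and Znat_b8 = Zd_nat[OF d1]
lemmas zrefl_b8 = zc_refl[OF d1] and zsym_b8 = zc_sym[OF d1] and ztrans_b8 = zc_trans[OF d1]
  and zadd_b8 = zc_add[OF d1] and zneg_b8 = zc_neg[OF d1] and zdiff_b8 = zc_diff[OF d1]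
  and zmult_b8 = zc_mult[OF d1] and z0iff_b8 = zc_0_iff[OF d1] and zdvd_b8 = zc_dvd[OF d1]
  and zscale_b8 = zc_scale[OF d1] and zint_b8 = zc_int[OF d1] and znat_b8 = zc_nat[OF d1]
  and zrep_b8 = zc_rep[OF d1]
declare Zpowi_b8[simp] Zpow_b8[simp] Z0_b8[simp] Z1_b8[simp] Zint_b8[simp] Znat_b8[simp] zrefl_b8[simp]
lemmas MMc_b8 = MM_carrier[OF d1] and MMm_b8 = MM_mult[OF d1] and MMo_b8 = MM_one[OF d1]
  and MMi_b8 = MM_inv[OF d1] and MMmi_b8 = MM_mult_inv[OF d1] and MMg_b8 = MM_group[OF d1]
declare MMc_b8[simp] MMm_b8[simp] MMo_b8[simp] MMi_b8[simp]
lemmas ccadd_b8 = cc_add[OF d1] and ccneg_b8 = cc_neg[OF d1] and cck_b8 = cc_k[OF d1]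
  and ccZd_b8 = cc_Zd[OF d1] and cczc_b8 = cc_zc[OF d1] and Hcong_b8 = Hsub_cong[OF d1]
  and Hsg_b8 = Hsub_subgroup[OF d1] and geo_b8 = geo_Zd[OF d1] and Dk_b8 = Dk1[OF d1]
  and padd_b8 = powi_add[OF d1] and pnz_b8 = powi_nz[OF d1] and cc0_b8 = cc_0[OF d1] and cceq_b8 = cc_eq[OF d1]
declare cc0_b8[simp]

abbreviation "DV \<equiv> DD d"
lemmas Hmem_b8 = Hsub_mem[OF d1] and zswap_b8 = zc_swap[OF d1] and Hidx_b8 = Hsub_index[OF d1]
lemmas degdvd_b8 = deg_dvd[OF d1]
lemmas classif_b8 = classify[OF d1]
lemmas conjH_b8 = conj_Hsub[OF d1] and Huniq_b8 = Hsub_unique[OF d1] and conjE'_b8 = conj_elem[OF d1]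






lemmas SrelA_b8 = Srel_alt[OF d1] and expsw_b8 = exp_swap[OF d1] and Seq_b8 = S_equiv[OF d1]
  and Srdeg_b8 = Srel_deg[OF d1]

lemma Mconj:
  assumes k: "k \<ge> 1" and k': "k' \<ge> 1" and cop: "coprime m d" and cop': "coprime m' d"
    and m: "m \<ge> 1" and x: "x \<in> Zd d" and x': "x' \<in> Zd d"
  shows "(Hsub d k m x, Hsub d k' m' x') \<in> subgroup_conj (MM d) \<longleftrightarrow>
    k = k' \<and> m = m' \<and> (\<exists>s::int. zc d (gcd m (d ^ k - 1)) x' (DV powi s * x))"
proof -
  interpret group "MM d" by (rule MMg_b8)
  define gg where "gg = gcd m (d ^ k - 1)"
  have ggm: "gg dvd m" unfolding gg_def by simp
  have ggE: "gg dvd d ^ k - 1" unfolding gg_def by simp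
  have Eeq: "DV ^ k - 1 = of_nat (d ^ k - 1)"
  proof -
    have "d ^ k \<ge> 1" using d1 by simp
    thus ?thesis by (simp add: of_nat_diff)
  qed
  show ?thesis
  proof
    assume "(Hsub d k m x, Hsub d k' m' x') \<in> subgroup_conj (MM d)"
    then obtain g where g: "g \<in> carrier (MM d)" and eq: "Hsub d k' m' x' = (g <#\<^bsub>MM d\<^esub> Hsub d k m x) #>\<^bsub>MM d\<^esub> inv\<^bsub>MM d\<^esub> g"
      unfolding subgroup_conj_def by auto
    obtain z s where gz: "g = (z, s)" by (cases g)
    have z: "z \<in> Zd d" using g gz by simp
    have X: "DV powi s * x - (DV ^ k - 1) * z \<in> Zd d" using x z by (intro Zdiff_b8 Zmult_b8) auto
    have "Hsub d k' m' x' = Hsub d k m (DV powi s * x - (DV ^ k - 1) * z)"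
      using eq conjH_b8[OF k, of z s m x] g gz by simp
    then have u: "k' = k \<and> m' = m \<and> zc d m' x' (DV powi s * x - (DV ^ k - 1) * z)"
      by (rule Huniq_b8[OF k' k cop' cop x' X])
    then have z1: "zc d gg x' (DV powi s * x - (DV ^ k - 1) * z)" using zdvd_b8 ggm by auto
    obtain t where t: "d ^ k - 1 = gg * t" using ggE by (auto elim: dvdE)
    have "zc d gg ((DV ^ k - 1) * z) 0" unfolding zc_def Eeq t using z
      by (intro bexI[of _ "of_nat t * z"]) (auto intro: Zmult_b8)
    then have "zc d gg (DV powi s * x - (DV ^ k - 1) * z) (DV powi s * x - 0)" by (intro zdiff_b8) simp_all
    then have "zc d gg x' (DV powi s * x)" using ztrans_b8[OF z1] by simp
    thus "k = k' \<and> m = m' \<and> (\<exists>s::int. zc d (gcd m (d ^ k - 1)) x' (DV powi s * x))"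
      using u unfolding gg_def by auto
  next
    assume "k = k' \<and> m = m' \<and> (\<exists>s::int. zc d (gcd m (d ^ k - 1)) x' (DV powi s * x))"
    then obtain s where kk: "k' = k" and mm: "m' = m" and s: "zc d gg x' (DV powi s * x)"
      unfolding gg_def by auto
    obtain w where w: "w \<in> Zd d" "x' - DV powi s * x = of_nat gg * w" using s unfolding zc_def by auto
    obtain u v where uv: "u * int m + v * int (d ^ k - 1) = gcd (int m) (int (d ^ k - 1))"
      using bezout_int by blast
    then have "u * int m + v * int (d ^ k - 1) = int gg" unfolding gg_def by simp
    then have uvq: "of_int u * of_nat m + of_int v * of_nat (d ^ k - 1) = (of_nat gg :: rat)"
      by (metis of_int_add of_int_mult of_int_of_nat_eq)
    define z where "z = - (of_int v * w)"
    have z: "z \<in> Zd d" unfolding z_def using w by (intro Zuminus_b8 Zmult_b8) auto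
    have "x' - (DV powi s * x - (DV ^ k - 1) * z) = of_nat m * (of_int u * w)"
    proof -
      have "x' - (DV powi s * x - (DV ^ k - 1) * z) = of_nat gg * w + (DV ^ k - 1) * z"
        using w(2) by (simp add: algebra_simps)
      also have "\<dots> = (of_int u * of_nat m + of_int v * of_nat (d ^ k - 1)) * w - of_nat (d ^ k - 1) * (of_int v * w)"
        unfolding uvq Eeq z_def by simp
      also have "\<dots> = of_nat m * (of_int u * w)" by (simp add: algebra_simps)
      finally show ?thesis .
    qed
    then have "zc d m x' (DV powi s * x - (DV ^ k - 1) * z)" unfolding zc_def using w(1)
      by (intro bexI[of _ "of_int u * w"]) (auto intro: Zmult_b8)
    then have "Hsub d k m x' = Hsub d k m (DV powi s * x - (DV ^ k - 1) * z)" by (rule Hcong_b8[OF k])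
    also have "\<dots> = ((z, s) <#\<^bsub>MM d\<^esub> Hsub d k m x) #>\<^bsub>MM d\<^esub> inv\<^bsub>MM d\<^esub> (z, s)"
      using conjH_b8[OF k, of z s m x] z by simp
    finally have "Hsub d k' m' x' = ((z, s) <#\<^bsub>MM d\<^esub> Hsub d k m x) #>\<^bsub>MM d\<^esub> inv\<^bsub>MM d\<^esub> (z, s)"
      using kk mm by simp
    moreover have "(z, s) \<in> carrier (MM d)" using z by simp
    moreover have "subgroup (Hsub d k m x) (MM d)" "subgroup (Hsub d k' m' x') (MM d)"
      using Hsg_b8 k k' by auto
    ultimately show "(Hsub d k m x, Hsub d k' m' x') \<in> subgroup_conj (MM d)"
      unfolding subgroup_conj_def by blast
  qed
qed

end

context fixes d :: nat assumes d1: "d > 1" begin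

lemmas Zadd_b9 = Zd_add[OF d1] and Zmult_b9 = Zd_mult[OF d1] and Zuminus_b9 = Zd_uminus[OF d1]
  and Zdiff_b9 = Zd_diff[OF d1] and Zpowi_b9 = Zd_powi[OF d1] and Zpow_b9 = Zd_pow[OF d1]
  and Z0_b9 = Zd_0[OF d1] and Z1_b9 = Zd_1[OF d1] and Zint_b9 = Zd_int[OF d1] and Znat_b9 = Zd_nat[OF d1]
lemmas zrefl_b9 = zc_refl[OF d1] and zsym_b9 = zc_sym[OF d1] and ztrans_b9 = zc_trans[OF d1]
  and zadd_b9 = zc_add[OF d1] and zneg_b9 = zc_neg[OF d1] and zdiff_b9 = zc_diff[OF d1]
  and zmult_b9 = zc_mult[OF d1] and z0iff_b9 = zc_0_iff[OF d1] and zdvd_b9 = zc_dvd[OF d1]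
  and zscale_b9 = zc_scale[OF d1] and zint_b9 = zc_int[OF d1] and znat_b9 = zc_nat[OF d1]
  and zrep_b9 = zc_rep[OF d1]
declare Zpowi_b9[simp] Zpow_b9[simp] Z0_b9[simp] Z1_b9[simp] Zint_b9[simp] Znat_b9[simp] zrefl_b9[simp]
lemmas MMc_b9 = MM_carrier[OF d1] and MMm_b9 = MM_mult[OF d1] and MMo_b9 = MM_one[OF d1]
  and MMi_b9 = MM_inv[OF d1] and MMmi_b9 = MM_mult_inv[OF d1] and MMg_b9 = MM_group[OF d1]
declare MMc_b9[simp] MMm_b9[simp] MMo_b9[simp] MMi_b9[simp]
lemmas ccadd_b9 = cc_add[OF d1] and ccneg_b9 = cc_neg[OF d1] and cck_b9 = cc_k[OF d1]
  and ccZd_b9 = cc_Zd[OF d1] and cczc_b9 = cc_zc[OF d1] and Hcong_b9 = Hsub_cong[OF d1]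
  and Hsg_b9 = Hsub_subgroup[OF d1] and geo_b9 = geo_Zd[OF d1] and Dk_b9 = Dk1[OF d1]
  and padd_b9 = powi_add[OF d1] and pnz_b9 = powi_nz[OF d1] and cc0_b9 = cc_0[OF d1] and cceq_b9 = cc_eq[OF d1]
declare cc0_b9[simp]

abbreviation "DW \<equiv> DD d"
lemmas Hmem_b9 = Hsub_mem[OF d1] and zswap_b9 = zc_swap[OF d1] and Hidx_b9 = Hsub_index[OF d1]
lemmas degdvd_b9 = deg_dvd[OF d1]
lemmas classif_b9 = classify[OF d1]
lemmas conjH_b9 = conj_Hsub[OF d1] and Huniq_b9 = Hsub_unique[OF d1] and conjE'_b9 = conj_elem[OF d1]






lemmas SrelA_b9 = Srel_alt[OF d1] and expsw_b9 = exp_swap[OF d1] and Seq_b9 = S_equiv[OF d1]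
  and Srdeg_b9 = Srel_deg[OF d1]

lemmas Mcj_b9 = Mconj[OF d1]

lemma S_facts: "(m, i) \<in> S_set d \<Longrightarrow> m \<ge> 1 \<and> coprime m d \<and> i < m"
  unfolding S_set_def by (auto simp: coprime_iff_gcd_eq_1)

lemma subS_facts:
  assumes p: "(m, i) \<in> S_set d" and deg: "S_degree d (m, i) dvd n" and n: "n \<ge> 1"
  shows "m dvd n \<and> n div m \<ge> 1 \<and> gcd m (d ^ (n div m) - 1) > 0 \<and>
    m div gcd m (d ^ (n div m) - 1) > 0 \<and>
    i = (m div gcd m (d ^ (n div m) - 1)) * (i div (m div gcd m (d ^ (n div m) - 1))) \<and>
    (m div gcd m (d ^ (n div m) - 1)) * gcd m (d ^ (n div m) - 1) = m \<and>
    subS d n (m, i) = Hsub d (n div m) m (of_nat (i div (m div gcd m (d ^ (n div m) - 1))))"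
proof -
  have S: "m \<ge> 1" "coprime m d" "i < m" using S_facts[OF p] by auto
  have c: "m dvd n" "(m div gcd m (d ^ (n div m) - 1)) dvd i" using degdvd_b9[OF p, of n] deg by auto
  have k: "n div m \<ge> 1"
  proof -
    obtain t where t: "n = m * t" using c(1) by (auto elim: dvdE)
    then have "t \<noteq> 0" using n by auto
    thus ?thesis using t S(1) by simp
  qed
  have g: "gcd m (d ^ (n div m) - 1) > 0" using S(1) by simp
  have gm: "gcd m (d ^ (n div m) - 1) dvd m" by simp
  have q: "m div gcd m (d ^ (n div m) - 1) > 0"
  proof -
    have "m div gcd m (d ^ (n div m) - 1) * gcd m (d ^ (n div m) - 1) = m" using gm by simp
    thus ?thesis using S(1) by (metis gr0I mult_is_0 not_one_le_zero)
  qed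
  show ?thesis using c k g q gm by (simp add: subS_def)
qed

lemma subS_SI:
  assumes p: "p \<in> S_set d" and deg: "S_degree d p dvd n" and n: "n \<ge> 1"
  shows "subS d n p \<in> subgroups_of_index (MM d) n"
proof -
  obtain m i where pe: "p = (m, i)" by (cases p)
  have S: "m \<ge> 1" "coprime m d" "i < m" using S_facts p pe by auto
  have F: "m dvd n" "n div m \<ge> 1" and sub: "subS d n p = Hsub d (n div m) m (of_nat (i div (m div gcd m (d ^ (n div m) - 1))))"
    using subS_facts[OF p[unfolded pe] deg[unfolded pe] n] pe by auto
  have "finite (rcosets\<^bsub>MM d\<^esub> (subS d n p)) \<and> card (rcosets\<^bsub>MM d\<^esub> (subS d n p)) = (n div m) * m"
    unfolding sub by (rule Hidx_b9[OF F(2) S(1) S(2)]) simp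
  moreover have "(n div m) * m = n" using F(1) by simp
  moreover have "subgroup (subS d n p) (MM d)" unfolding sub by (rule Hsg_b9[OF F(2)])
  ultimately show ?thesis unfolding subgroups_of_index_def by simp
qed

lemma subS_conj:
  assumes p: "p \<in> S_set d" and degp: "S_degree d p dvd n" and q: "q \<in> S_set d"
    and degq: "S_degree d q dvd n" and n: "n \<ge> 1"
  shows "(subS d n p, subS d n q) \<in> subgroup_conj (MM d) \<longleftrightarrow> (p, q) \<in> S_rel d"
proof -
  obtain m i where pe: "p = (m, i)" by (cases p)
  obtain m' i' where qe: "q = (m', i')" by (cases q)
  have S: "m \<ge> 1" "coprime m d" "i < m" using S_facts p pe by auto
  have S': "m' \<ge> 1" "coprime m' d" "i' < m'" using S_facts q qe by auto
  note F = subS_facts[OF p[unfolded pe] degp[unfolded pe] n]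
  note F' = subS_facts[OF q[unfolded qe] degq[unfolded qe] n]
  define gg where "gg = gcd m (d ^ (n div m) - 1)"
  define qq where "qq = m div gg"
  define x where "x = i div qq"
  define gg' where "gg' = gcd m' (d ^ (n div m') - 1)"
  define qq' where "qq' = m' div gg'"
  define x' where "x' = i' div qq'"
  have Fp: "n div m \<ge> 1" "qq > 0" "i = qq * x" "qq * gg = m" "subS d n p = Hsub d (n div m) m (of_nat x)"
    using F unfolding pe gg_def[symmetric] qq_def[symmetric] x_def[symmetric] by auto
  have Fq: "n div m' \<ge> 1" "qq' > 0" "i' = qq' * x'" "qq' * gg' = m'" "subS d n q = Hsub d (n div m') m' (of_nat x')"
    using F' unfolding qe gg'_def[symmetric] qq'_def[symmetric] x'_def[symmetric] by auto
  have "(subS d n p, subS d n q) \<in> subgroup_conj (MM d) \<longleftrightarrow>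
      n div m = n div m' \<and> m = m' \<and> (\<exists>s::int. zc d gg (of_nat x') (DW powi s * of_nat x))"
    unfolding Fp(5) Fq(5) gg_def by (rule Mcj_b9[OF Fp(1) Fq(1) S(2) S'(2) S(1)]) simp_all
  also have "\<dots> \<longleftrightarrow> m = m' \<and> (\<exists>s::int. zc d m (of_nat i') (DW powi s * of_nat i))"
  proof -
    have "m = m' \<Longrightarrow> zc d gg (of_nat x') (DW powi s * of_nat x) \<longleftrightarrow> zc d m (of_nat i') (DW powi s * of_nat i)" for s
    proof -
      assume mm: "m = m'"
      then have "qq' = qq" "x' = i' div qq" unfolding qq'_def qq_def gg'_def gg_def x'_def by simp_all
      then have i': "i' = qq * x'" using Fq(3) by simp
      have "zc d gg (of_nat x') (DW powi s * of_nat x) \<longleftrightarrow>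
          zc d (qq * gg) (of_nat qq * of_nat x') (of_nat qq * (DW powi s * of_nat x))"
        using zscale_b9[OF Fp(2)] by simp
      also have "\<dots> \<longleftrightarrow> zc d m (of_nat i') (DW powi s * of_nat i)"
        unfolding Fp(4) i' Fp(3) by (simp add: ac_simps)
      finally show ?thesis .
    qed
    thus ?thesis by auto
  qed
  also have "\<dots> \<longleftrightarrow> (p, q) \<in> S_rel d"
    unfolding pe qe SrelA_b9 using p q pe qe expsw_b9 by auto
  finally show ?thesis .
qed

lemma SI_rep:
  assumes H: "H \<in> subgroups_of_index (MM d) n" and n: "n \<ge> 1"
  shows "\<exists>p \<in> S_set d. S_degree d p dvd n \<and> (subS d n p, H) \<in> subgroup_conj (MM d)"
proof -
  have sg: "subgroup H (MM d)" and fin: "finite (rcosets\<^bsub>MM d\<^esub> H)" and cd: "card (rcosets\<^bsub>MM d\<^esub> H) = n"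
    using H unfolding subgroups_of_index_def by auto
  obtain k m x where kmx: "k \<ge> 1" "m \<ge> 1" "coprime m d" "x < m" "H = Hsub d k m (of_nat x)"
    using classif_b9[OF sg fin] by blast
  have "card (rcosets\<^bsub>MM d\<^esub> H) = k * m" using Hidx_b9[OF kmx(1-3), of "of_nat x"] kmx(5) by simp
  then have nkm: "n = k * m" using cd by simp
  then have kn: "k = n div m" "m dvd n" using kmx(2) by simp_all
  define gg where "gg = gcd m (d ^ k - 1)"
  define qq where "qq = m div gg"
  have gg0: "gg > 0" unfolding gg_def using kmx(2) by simp
  have ggm: "gg dvd m" unfolding gg_def by simp
  have qg: "qq * gg = m" unfolding qq_def using ggm by simp
  have qq0: "qq > 0" using qg kmx(2) by (metis gr0I mult_is_0 not_one_le_zero)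
  define x0 where "x0 = x mod gg"
  have x0: "x0 < gg" unfolding x0_def using gg0 by simp
  define i where "i = qq * x0"
  have im: "i < m" unfolding i_def using x0 qg qq0 by (metis mult_less_cancel1)
  have pS: "(m, i) \<in> S_set d" unfolding S_set_def using kmx(2,3) im by (simp add: coprime_iff_gcd_eq_1)
  have qi: "(m div gcd m (d ^ (n div m) - 1)) dvd i" unfolding kn(1)[symmetric] gg_def[symmetric] qq_def[symmetric] i_def by simp
  have degp: "S_degree d (m, i) dvd n" using degdvd_b9[OF pS, of n] kn(2) qi by simp
  have nk: "n div m = k" using kn(1) by simp
  have e1: "i div (m div gcd m (d ^ (n div m) - 1)) = x0"
    unfolding nk gg_def[symmetric] qq_def[symmetric] i_def using qq0 by simp
  have sub: "subS d n (m, i) = Hsub d k m (of_nat x0)"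
    unfolding subS_def using e1 nk by simp
  have copg: "coprime gg d" using kmx(3) ggm coprime_imp_coprime dvd_trans by blast
  have "[x = x0] (mod gg)" unfolding x0_def by (simp add: cong_def)
  then have "zc d gg (of_nat x) (of_nat x0)" using znat_b9[OF copg] by blast
  then have "zc d gg (of_nat x) (DW powi 0 * of_nat x0)" by simp
  then have ex: "\<exists>s::int. zc d (gcd m (d ^ k - 1)) (of_nat x) (DW powi s * of_nat x0)"
    unfolding gg_def by blast
  have iff: "(Hsub d k m (of_nat x0), Hsub d k m (of_nat x)) \<in> subgroup_conj (MM d) \<longleftrightarrow>
    k = k \<and> m = m \<and> (\<exists>s::int. zc d (gcd m (d ^ k - 1)) (of_nat x) (DW powi s * of_nat x0))"
    by (rule Mcj_b9[OF kmx(1) kmx(1) kmx(3) kmx(3) kmx(2)]) simp_all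
  have "(Hsub d k m (of_nat x0), Hsub d k m (of_nat x)) \<in> subgroup_conj (MM d)"
    using iff ex by blast
  thus ?thesis using pS degp sub kmx(5) by auto
qed

end

context fixes d :: nat assumes d1: "d > 1" begin

lemmas Zadd_b10 = Zd_add[OF d1] and Zmult_b10 = Zd_mult[OF d1] and Zuminus_b10 = Zd_uminus[OF d1]
  and Zdiff_b10 = Zd_diff[OF d1] and Zpowi_b10 = Zd_powi[OF d1] and Zpow_b10 = Zd_pow[OF d1]
  and Z0_b10 = Zd_0[OF d1] and Z1_b10 = Zd_1[OF d1] and Zint_b10 = Zd_int[OF d1] and Znat_b10 = Zd_nat[OF d1]
lemmas zrefl_b10 = zc_refl[OF d1] and zsym_b10 = zc_sym[OF d1] and ztrans_b10 = zc_trans[OF d1]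
  and zadd_b10 = zc_add[OF d1] and zneg_b10 = zc_neg[OF d1] and zdiff_b10 = zc_diff[OF d1]
  and zmult_b10 = zc_mult[OF d1] and z0iff_b10 = zc_0_iff[OF d1] and zdvd_b10 = zc_dvd[OF d1]
  and zscale_b10 = zc_scale[OF d1] and zint_b10 = zc_int[OF d1] and znat_b10 = zc_nat[OF d1]
  and zrep_b10 = zc_rep[OF d1]
declare Zpowi_b10[simp] Zpow_b10[simp] Z0_b10[simp] Z1_b10[simp] Zint_b10[simp] Znat_b10[simp] zrefl_b10[simp]
lemmas MMc_b10 = MM_carrier[OF d1] and MMm_b10 = MM_mult[OF d1] and MMo_b10 = MM_one[OF d1]
  and MMi_b10 = MM_inv[OF d1] and MMmi_b10 = MM_mult_inv[OF d1] and MMg_b10 = MM_group[OF d1]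
declare MMc_b10[simp] MMm_b10[simp] MMo_b10[simp] MMi_b10[simp]
lemmas ccadd_b10 = cc_add[OF d1] and ccneg_b10 = cc_neg[OF d1] and cck_b10 = cc_k[OF d1]
  and ccZd_b10 = cc_Zd[OF d1] and cczc_b10 = cc_zc[OF d1] and Hcong_b10 = Hsub_cong[OF d1]
  and Hsg_b10 = Hsub_subgroup[OF d1] and geo_b10 = geo_Zd[OF d1] and Dk_b10 = Dk1[OF d1]
  and padd_b10 = powi_add[OF d1] and pnz_b10 = powi_nz[OF d1] and cc0_b10 = cc_0[OF d1] and cceq_b10 = cc_eq[OF d1]
declare cc0_b10[simp]

abbreviation "DX \<equiv> DD d"
lemmas Hmem_b10 = Hsub_mem[OF d1] and zswap_b10 = zc_swap[OF d1] and Hidx_b10 = Hsub_index[OF d1]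
lemmas degdvd_b10 = deg_dvd[OF d1]
lemmas classif_b10 = classify[OF d1]
lemmas conjH_b10 = conj_Hsub[OF d1] and Huniq_b10 = Hsub_unique[OF d1] and conjE'_b10 = conj_elem[OF d1]






lemmas SrelA_b10 = Srel_alt[OF d1] and expsw_b10 = exp_swap[OF d1] and Seq_b10 = S_equiv[OF d1]
  and Srdeg_b10 = Srel_deg[OF d1]

lemmas Mcj_b10 = Mconj[OF d1]

lemmas subSSI_b10 = subS_SI[OF d1] and subSconj_b10 = subS_conj[OF d1] and SIrep_b10 = SI_rep[OF d1]

lemma M_count:
  assumes n: "n \<ge> 1"
  shows "card (subgroups_of_index (MM d) n // subgroup_conj (MM d)) =
         card {C \<in> S_set d // S_rel d. class_degree d C dvd n}"
proof -
  interpret group "MM d" by (rule MMg_b10)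
  let ?SI = "subgroups_of_index (MM d) n"
  let ?T = "{C \<in> S_set d // S_rel d. class_degree d C dvd n}"
  let ?r = "subgroup_conj (MM d)"
  have ceq: "equiv {H. subgroup H (MM d)} ?r" by (rule conj_equiv)
  have SIsub: "H \<in> ?SI \<Longrightarrow> H \<in> {H. subgroup H (MM d)}" for H unfolding subgroups_of_index_def by simp
  define rep where "rep C = (SOME p. p \<in> C)" for C :: "(nat \<times> nat) set"
  have repC: "rep C \<in> C \<and> rep C \<in> S_set d \<and> C = S_rel d `` {rep C}" if C: "C \<in> S_set d // S_rel d" for C
  proof -
    obtain p where p: "p \<in> S_set d" "C = S_rel d `` {p}" using C by (rule quotientE)
    have "p \<in> C" using p equiv_class_self[OF Seq_b10] by simp
    then have rc: "rep C \<in> C" unfolding rep_def by (rule someI)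
    then have pr: "(p, rep C) \<in> S_rel d" using p by simp
    then have "rep C \<in> S_set d" using Seq_b10 unfolding equiv_def by blast
    moreover have "C = S_rel d `` {rep C}" using p(2) equiv_class_eq[OF Seq_b10 pr] by simp
    ultimately show ?thesis using rc by simp
  qed
  have cdeg: "class_degree d C = S_degree d (rep C)" for C unfolding class_degree_def rep_def ..
  define F where "F C = ?r `` {subS d n (rep C)}" for C
  have bij: "bij_betw F ?T (?SI // ?r)"
  proof (rule bij_betwI')
    fix C1 C2 assume C1: "C1 \<in> ?T" and C2: "C2 \<in> ?T"
    have r1: "rep C1 \<in> S_set d" "C1 = S_rel d `` {rep C1}" "S_degree d (rep C1) dvd n"
      using repC C1 cdeg by auto
    have r2: "rep C2 \<in> S_set d" "C2 = S_rel d `` {rep C2}" "S_degree d (rep C2) dvd n"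
      using repC C2 cdeg by auto
    have s1: "subS d n (rep C1) \<in> {H. subgroup H (MM d)}" using SIsub subSSI_b10[OF r1(1) r1(3) n] by blast
    have s2: "subS d n (rep C2) \<in> {H. subgroup H (MM d)}" using SIsub subSSI_b10[OF r2(1) r2(3) n] by blast
    have "F C1 = F C2 \<longleftrightarrow> (subS d n (rep C1), subS d n (rep C2)) \<in> ?r"
      unfolding F_def by (rule eq_equiv_class_iff[OF ceq s1 s2])
    also have "\<dots> \<longleftrightarrow> (rep C1, rep C2) \<in> S_rel d" by (rule subSconj_b10[OF r1(1) r1(3) r2(1) r2(3) n])
    also have "\<dots> \<longleftrightarrow> C1 = C2" using eq_equiv_class_iff[OF Seq_b10 r1(1) r2(1)] r1(2) r2(2) by simp
    finally show "(F C1 = F C2) = (C1 = C2)" .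
  next
    fix C assume C: "C \<in> ?T"
    have r: "rep C \<in> S_set d" "S_degree d (rep C) dvd n" using repC C cdeg by auto
    show "F C \<in> ?SI // ?r" unfolding F_def by (rule quotientI[OF subSSI_b10[OF r n]])
  next
    fix X assume X: "X \<in> ?SI // ?r"
    obtain H where H: "H \<in> ?SI" "X = ?r `` {H}" using X by (rule quotientE)
    obtain p where p: "p \<in> S_set d" "S_degree d p dvd n" "(subS d n p, H) \<in> ?r" using SIrep_b10[OF H(1) n] by blast
    define C where "C = S_rel d `` {p}"
    have CQ: "C \<in> S_set d // S_rel d" unfolding C_def using p(1) by (rule quotientI)
    have rC: "rep C \<in> C" "rep C \<in> S_set d" using repC[OF CQ] by auto
    have prc: "(p, rep C) \<in> S_rel d" using rC(1) unfolding C_def by simp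
    have degC: "S_degree d (rep C) dvd n" using Srdeg_b10[OF prc] p(2) by simp
    have CT: "C \<in> ?T" using CQ degC cdeg by simp
    have "(subS d n (rep C), subS d n p) \<in> ?r"
      using subSconj_b10[OF rC(2) degC p(1) p(2) n] prc Seq_b10 unfolding equiv_def sym_def by blast
    then have "(subS d n (rep C), H) \<in> ?r" using p(3) ceq unfolding equiv_def trans_def by blast
    then have "F C = X" unfolding F_def H(2) using equiv_class_eq[OF ceq] by blast
    thus "\<exists>C \<in> ?T. X = F C" using CT by blast
  qed
  show ?thesis using bij_betw_same_card[OF bij] by simp
qed

end

lemma card_quot_transfer:
  assumes bij: "bij_betw f A' B'" and r: "r \<subseteq> A' \<times> A'" and s: "s \<subseteq> B' \<times> B'"
    and rel: "\<And>x y. x \<in> A' \<Longrightarrow> y \<in> A' \<Longrightarrow> (x, y) \<in> r \<longleftrightarrow> (f x, f y) \<in> s"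
    and AA: "A \<subseteq> A'" and fA: "f ` A = B"
  shows "card (A // r) = card (B // s)"
proof -
  have inj: "inj_on f A'" using bij by (simp add: bij_betw_def)
  have cls: "f ` (r `` {x}) = s `` {f x}" if x: "x \<in> A'" for x
  proof
    show "f ` (r `` {x}) \<subseteq> s `` {f x}"
    proof
      fix z assume "z \<in> f ` (r `` {x})"
      then obtain y where y: "(x, y) \<in> r" "z = f y" by auto
      have "y \<in> A'" using y r by auto
      thus "z \<in> s `` {f x}" using rel[OF x] y by auto
    qed
  next
    show "s `` {f x} \<subseteq> f ` (r `` {x})"
    proof
      fix z assume "z \<in> s `` {f x}"
      then have z: "(f x, z) \<in> s" by simp
      then have "z \<in> B'" using s by auto
      then obtain y where y: "y \<in> A'" "z = f y" using bij by (auto simp: bij_betw_def)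
      then have "(x, y) \<in> r" using rel[OF x y(1)] z by simp
      thus "z \<in> f ` (r `` {x})" using y by auto
    qed
  qed
  have img: "(\<lambda>C. f ` C) ` (A // r) = B // s"
  proof -
    have "(\<lambda>C. f ` C) ` (A // r) = (\<lambda>x. s `` {f x}) ` A"
      unfolding quotient_def using cls AA by auto
    also have "\<dots> = (\<lambda>y. s `` {y}) ` (f ` A)" by auto
    also have "\<dots> = B // s" unfolding fA quotient_def by auto
    finally show ?thesis .
  qed
  have injC: "inj_on (\<lambda>C. f ` C) (A // r)"
  proof (rule inj_onI)
    fix C1 C2 assume C1: "C1 \<in> A // r" and C2: "C2 \<in> A // r" and eq: "f ` C1 = f ` C2"
    have "C1 \<subseteq> A'" "C2 \<subseteq> A'" using C1 C2 r unfolding quotient_def by auto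
    thus "C1 = C2" using inj_on_image_eq_iff[OF inj] eq by blast
  qed
  show ?thesis using card_image[OF injC] img by simp
qed

lemma (in group_hom) img_conj:
  assumes S: "S \<subseteq> carrier G" and g: "g \<in> carrier G"
  shows "h ` ((g <# S) #> inv g) = (h g <#\<^bsub>H\<^esub> h ` S) #>\<^bsub>H\<^esub> inv\<^bsub>H\<^esub> (h g)"
proof -
  have hH: "h ` S \<subseteq> carrier H" using S by auto
  have "h ` ((g <# S) #> inv g) = h ` ((\<lambda>x. g \<otimes> x \<otimes> inv g) ` S)" using G.conj_set_eq[OF S g] by simp
  also have "\<dots> = (\<lambda>x. h g \<otimes>\<^bsub>H\<^esub> h x \<otimes>\<^bsub>H\<^esub> inv\<^bsub>H\<^esub> (h g)) ` S"
    unfolding image_image using S g by (intro image_cong) auto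
  also have "\<dots> = (\<lambda>y. h g \<otimes>\<^bsub>H\<^esub> y \<otimes>\<^bsub>H\<^esub> inv\<^bsub>H\<^esub> (h g)) ` (h ` S)" by (simp add: image_image)
  also have "\<dots> = (h g <#\<^bsub>H\<^esub> h ` S) #>\<^bsub>H\<^esub> inv\<^bsub>H\<^esub> (h g)" using H.conj_set_eq[OF hH] g by simp
  finally show ?thesis .
qed

lemma (in group_hom) img_rcos:
  assumes S: "S \<subseteq> carrier G" and g: "g \<in> carrier G"
  shows "h ` (S #> g) = h ` S #>\<^bsub>H\<^esub> h g"
proof -
  have "h ` (S #> g) = (\<lambda>x. h (x \<otimes> g)) ` S" unfolding r_coset_def by auto
  also have "\<dots> = (\<lambda>x. h x \<otimes>\<^bsub>H\<^esub> h g) ` S" using S g by (intro image_cong) auto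
  also have "\<dots> = h ` S #>\<^bsub>H\<^esub> h g" unfolding r_coset_def by auto
  finally show ?thesis .
qed

lemma iso_transfer:
  assumes G: "group G" and M: "group M" and hh: "h \<in> hom G M" and bij: "bij_betw h (carrier G) (carrier M)"
  shows "num_conj_classes_index G n = num_conj_classes_index M n"
proof -
  interpret gh: group_hom G M h using G M hh by (simp add: group_hom_def group_hom_axioms_def)
  define h' where "h' = inv_into (carrier G) h"
  have "h \<in> iso G M" using hh bij by (simp add: iso_def)
  then have "h' \<in> iso M G" unfolding h'_def by (rule group.iso_set_sym[OF G])
  then have h'hom: "h' \<in> hom M G" by (simp add: iso_def)
  interpret gh': group_hom M G h' using G M h'hom by (simp add: group_hom_def group_hom_axioms_def)
  have injh: "inj_on h (carrier G)" using bij by (simp add: bij_betw_def)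
  have surjh: "h ` carrier G = carrier M" using bij by (simp add: bij_betw_def)
  have hh': "y \<in> carrier M \<Longrightarrow> h (h' y) = y" for y unfolding h'_def using surjh by (simp add: f_inv_into_f)
  have h'c: "y \<in> carrier M \<Longrightarrow> h' y \<in> carrier G" for y unfolding h'_def using surjh by (metis inv_into_into)
  let ?A' = "{H. subgroup H G}" and ?B' = "{K. subgroup K M}"
  have imgsub: "h ` (h' ` K) = K" if K: "K \<subseteq> carrier M" for K
  proof -
    have "h ` (h' ` K) = (\<lambda>y. h (h' y)) ` K" by (simp add: image_image)
    also have "\<dots> = (\<lambda>y. y) ` K" using K hh' by (intro image_cong) auto
    finally show ?thesis by simp
  qed
  have bijI: "bij_betw (\<lambda>H. h ` H) ?A' ?B'"
  proof (rule bij_betw_imageI)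
    show "inj_on (\<lambda>H. h ` H) ?A'"
    proof (rule inj_onI)
      fix H1 H2 assume "H1 \<in> ?A'" "H2 \<in> ?A'" "h ` H1 = h ` H2"
      moreover have "H1 \<subseteq> carrier G" "H2 \<subseteq> carrier G" using calculation subgroup.subset by auto
      ultimately show "H1 = H2" using inj_on_image_eq_iff[OF injh] by blast
    qed
  next
    show "(\<lambda>H. h ` H) ` ?A' = ?B'"
    proof
      show "(\<lambda>H. h ` H) ` ?A' \<subseteq> ?B'" using gh.subgroup_img_is_subgroup by auto
    next
      show "?B' \<subseteq> (\<lambda>H. h ` H) ` ?A'"
      proof
        fix K assume "K \<in> ?B'"
        then have K: "subgroup K M" by simp
        have a: "subgroup (h' ` K) G" by (rule gh'.subgroup_img_is_subgroup[OF K])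
        have b: "h ` (h' ` K) = K" by (rule imgsub[OF subgroup.subset[OF K]])
        show "K \<in> (\<lambda>H. h ` H) ` ?A'"
        proof (rule image_eqI[where x="h' ` K"])
          show "K = h ` (h' ` K)" using b by simp
          show "h' ` K \<in> ?A'" using a by simp
        qed
      qed
    qed
  qed
  have rel: "(H, K) \<in> subgroup_conj G \<longleftrightarrow> (h ` H, h ` K) \<in> subgroup_conj M"
    if H: "H \<in> ?A'" and K: "K \<in> ?A'" for H K
  proof -
    have Hs: "subgroup H G" "subgroup K G" using H K by auto
    have Hc: "H \<subseteq> carrier G" "K \<subseteq> carrier G" using Hs subgroup.subset by auto
    have hs: "subgroup (h ` H) M" "subgroup (h ` K) M" using gh.subgroup_img_is_subgroup Hs by auto
    show ?thesis
    proof
      assume "(H, K) \<in> subgroup_conj G"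
      then obtain g where g: "g \<in> carrier G" "K = (g <#\<^bsub>G\<^esub> H) #>\<^bsub>G\<^esub> inv\<^bsub>G\<^esub> g"
        unfolding subgroup_conj_def by auto
      then have "h ` K = (h g <#\<^bsub>M\<^esub> h ` H) #>\<^bsub>M\<^esub> inv\<^bsub>M\<^esub> (h g)" using gh.img_conj[OF Hc(1) g(1)] by simp
      moreover have "h g \<in> carrier M" using g by simp
      ultimately show "(h ` H, h ` K) \<in> subgroup_conj M" unfolding subgroup_conj_def using hs by blast
    next
      assume "(h ` H, h ` K) \<in> subgroup_conj M"
      then obtain y where y: "y \<in> carrier M" "h ` K = (y <#\<^bsub>M\<^esub> h ` H) #>\<^bsub>M\<^esub> inv\<^bsub>M\<^esub> y"
        unfolding subgroup_conj_def by auto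
      define g where "g = h' y"
      have g: "g \<in> carrier G" "h g = y" unfolding g_def using h'c hh' y by auto
      have "h ` K = h ` ((g <#\<^bsub>G\<^esub> H) #>\<^bsub>G\<^esub> inv\<^bsub>G\<^esub> g)" using y(2) gh.img_conj[OF Hc(1) g(1)] g(2) by simp
      moreover have "(g <#\<^bsub>G\<^esub> H) #>\<^bsub>G\<^esub> inv\<^bsub>G\<^esub> g \<subseteq> carrier G"
        using gh.G.conj_set_eq[OF Hc(1) g(1)] Hc(1) g(1) by auto
      ultimately have "K = (g <#\<^bsub>G\<^esub> H) #>\<^bsub>G\<^esub> inv\<^bsub>G\<^esub> g" using inj_on_image_eq_iff[OF injh] Hc(2) by blast
      thus "(H, K) \<in> subgroup_conj G" unfolding subgroup_conj_def using Hs g(1) by blast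
    qed
  qed
  have rcos: "rcosets\<^bsub>M\<^esub> (h ` H) = (\<lambda>X. h ` X) ` (rcosets\<^bsub>G\<^esub> H)" if H: "H \<subseteq> carrier G" for H
  proof -
    have "rcosets\<^bsub>M\<^esub> (h ` H) = (\<lambda>y. h ` H #>\<^bsub>M\<^esub> y) ` carrier M" unfolding RCOSETS_def by auto
    also have "\<dots> = (\<lambda>g. h ` H #>\<^bsub>M\<^esub> h g) ` carrier G" unfolding surjh[symmetric] by (simp add: image_image)
    also have "\<dots> = (\<lambda>g. h ` (H #>\<^bsub>G\<^esub> g)) ` carrier G" using gh.img_rcos[OF H] by simp
    also have "\<dots> = (\<lambda>X. h ` X) ` (rcosets\<^bsub>G\<^esub> H)" unfolding RCOSETS_def by auto
    finally show ?thesis .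
  qed
  have injR: "inj_on (\<lambda>X. h ` X) (rcosets\<^bsub>G\<^esub> H)" if H: "subgroup H G" for H
  proof (rule inj_onI)
    fix X Y assume "X \<in> rcosets\<^bsub>G\<^esub> H" "Y \<in> rcosets\<^bsub>G\<^esub> H" "h ` X = h ` Y"
    moreover have "X \<subseteq> carrier G" "Y \<subseteq> carrier G"
      using calculation subgroup.rcosets_carrier[OF H G] by auto
    ultimately show "X = Y" using inj_on_image_eq_iff[OF injh] by blast
  qed
  have idx: "H \<in> subgroups_of_index G n \<longleftrightarrow> h ` H \<in> subgroups_of_index M n" if H: "subgroup H G" for H
  proof -
    have Hc: "H \<subseteq> carrier G" using subgroup.subset[OF H] .
    have "finite (rcosets\<^bsub>M\<^esub> (h ` H)) \<longleftrightarrow> finite (rcosets\<^bsub>G\<^esub> H)"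
      unfolding rcos[OF Hc] using finite_image_iff[OF injR[OF H]] .
    moreover have "card (rcosets\<^bsub>M\<^esub> (h ` H)) = card (rcosets\<^bsub>G\<^esub> H)"
      unfolding rcos[OF Hc] using card_image[OF injR[OF H]] .
    moreover have "subgroup (h ` H) M" using gh.subgroup_img_is_subgroup[OF H] .
    ultimately show ?thesis unfolding subgroups_of_index_def using H by auto
  qed
  have fA: "(\<lambda>H. h ` H) ` subgroups_of_index G n = subgroups_of_index M n"
  proof
    show "(\<lambda>H. h ` H) ` subgroups_of_index G n \<subseteq> subgroups_of_index M n"
      using idx unfolding subgroups_of_index_def by blast
  next
    show "subgroups_of_index M n \<subseteq> (\<lambda>H. h ` H) ` subgroups_of_index G n"
    proof
      fix K assume K: "K \<in> subgroups_of_index M n"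
      then have Ks: "K \<in> ?B'" unfolding subgroups_of_index_def by simp
      have "K \<in> (\<lambda>H. h ` H) ` ?A'" using bijI Ks by (simp add: bij_betw_def)
      then obtain H where H: "H \<in> ?A'" "K = h ` H" by blast
      then have "H \<in> subgroups_of_index G n" using idx K by auto
      thus "K \<in> (\<lambda>H. h ` H) ` subgroups_of_index G n" using H by blast
    qed
  qed
  show ?thesis unfolding num_conj_classes_index_def
  proof (rule card_quot_transfer[OF bijI])
    show "subgroup_conj G \<subseteq> ?A' \<times> ?A'" unfolding subgroup_conj_def by auto
    show "subgroup_conj M \<subseteq> ?B' \<times> ?B'" unfolding subgroup_conj_def by auto
    show "\<And>x y. x \<in> ?A' \<Longrightarrow> y \<in> ?A' \<Longrightarrow> (x, y) \<in> subgroup_conj G \<longleftrightarrow> (h ` x, h ` y) \<in> subgroup_conj M"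
      using rel by blast
    show "subgroups_of_index G n \<subseteq> ?A'" unfolding subgroups_of_index_def by auto
    show "(\<lambda>H. h ` H) ` subgroups_of_index G n = subgroups_of_index M n" by (rule fA)
  qed
qed


lemma bs_ctx: "bs_eq d u v \<Longrightarrow> bs_eq d (x @ u @ y) (x @ v @ y)"
proof (induct rule: bs_eq.induct)
  case (bs_refl w) show ?case by (rule bs_eq.bs_refl)
next
  case (bs_sym u v) thus ?case by (blast intro: bs_eq.bs_sym)
next
  case (bs_trans u v w) thus ?case by (blast intro: bs_eq.bs_trans)
next
  case (bs_cancel u g s v)
  show ?case using bs_eq.bs_cancel[of d "x @ u" g s "v @ y"] by simp
next
  case (bs_rel u v)
  show ?case using bs_eq.bs_rel[of d "x @ u" "v @ y"] by simp
qed

definition cls :: "nat \<Rightarrow> letter list \<Rightarrow> letter list set" where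
  "cls d w = {v. bs_eq d w v}"

lemma cls_eq: "cls d u = cls d v \<longleftrightarrow> bs_eq d u v"
proof
  assume "cls d u = cls d v"
  moreover have "v \<in> cls d v" unfolding cls_def by (simp add: bs_refl)
  ultimately show "bs_eq d u v" unfolding cls_def by auto
next
  assume uv: "bs_eq d u v"
  show "cls d u = cls d v" unfolding cls_def using uv
    by (auto intro: bs_trans bs_sym)
qed

lemma cls_self: "w \<in> cls d w" unfolding cls_def by (simp add: bs_refl)

lemma BS_carrier: "carrier (BS d) = range (cls d)"
  unfolding BS_def cls_def by auto

lemma BS_one: "\<one>\<^bsub>BS d\<^esub> = cls d []"
  unfolding BS_def cls_def by simp

lemma BS_mult: "cls d u \<otimes>\<^bsub>BS d\<^esub> cls d w = cls d (u @ w)"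
proof -
  have "{v. \<exists>x\<in>cls d u. \<exists>y\<in>cls d w. bs_eq d (x @ y) v} = cls d (u @ w)"
  proof
    show "{v. \<exists>x\<in>cls d u. \<exists>y\<in>cls d w. bs_eq d (x @ y) v} \<subseteq> cls d (u @ w)"
    proof
      fix v assume "v \<in> {v. \<exists>x\<in>cls d u. \<exists>y\<in>cls d w. bs_eq d (x @ y) v}"
      then obtain x y where xy: "bs_eq d u x" "bs_eq d w y" "bs_eq d (x @ y) v" unfolding cls_def by auto
      have "bs_eq d (u @ w) (x @ w)" using bs_ctx[OF xy(1), of "[]" w] by simp
      moreover have "bs_eq d (x @ w) (x @ y)" using bs_ctx[OF xy(2), of x "[]"] by simp
      ultimately show "v \<in> cls d (u @ w)" unfolding cls_def using xy(3) by (blast intro: bs_trans)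
    qed
  next
    show "cls d (u @ w) \<subseteq> {v. \<exists>x\<in>cls d u. \<exists>y\<in>cls d w. bs_eq d (x @ y) v}"
      unfolding cls_def by (auto intro: bs_refl)
  qed
  thus ?thesis unfolding BS_def cls_def by simp
qed

definition invw :: "letter list \<Rightarrow> letter list" where
  "invw w = rev (map (\<lambda>(g, s). (g, \<not> s)) w)"

lemma invw_cancel: "bs_eq d (invw w @ w) []"
proof (induct w)
  case Nil show ?case by (simp add: invw_def bs_refl)
next
  case (Cons a w)
  obtain g s where a: "a = (g, s)" by (cases a)
  have "bs_eq d (invw w @ [(g, \<not> s), (g, \<not> \<not> s)] @ w) (invw w @ w)" by (rule bs_cancel)
  then have "bs_eq d (invw (a # w) @ a # w) (invw w @ w)" by (simp add: invw_def a)
  thus ?case using Cons by (blast intro: bs_trans)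
qed

lemma BS_group: "group (BS d)"
proof (rule groupI)
  fix x y assume "x \<in> carrier (BS d)" "y \<in> carrier (BS d)"
  thus "x \<otimes>\<^bsub>BS d\<^esub> y \<in> carrier (BS d)" unfolding BS_carrier using BS_mult by auto
next
  show "\<one>\<^bsub>BS d\<^esub> \<in> carrier (BS d)" unfolding BS_carrier BS_one by simp
next
  fix x y z assume "x \<in> carrier (BS d)" "y \<in> carrier (BS d)" "z \<in> carrier (BS d)"
  thus "x \<otimes>\<^bsub>BS d\<^esub> y \<otimes>\<^bsub>BS d\<^esub> z = x \<otimes>\<^bsub>BS d\<^esub> (y \<otimes>\<^bsub>BS d\<^esub> z)"
    unfolding BS_carrier by (auto simp: BS_mult)
next
  fix x assume "x \<in> carrier (BS d)"
  thus "\<one>\<^bsub>BS d\<^esub> \<otimes>\<^bsub>BS d\<^esub> x = x" unfolding BS_carrier BS_one by (auto simp: BS_mult)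
next
  fix x assume "x \<in> carrier (BS d)"
  then obtain w where w: "x = cls d w" unfolding BS_carrier by auto
  have "cls d (invw w) \<otimes>\<^bsub>BS d\<^esub> x = \<one>\<^bsub>BS d\<^esub>"
    unfolding w BS_mult BS_one cls_eq by (rule invw_cancel)
  thus "\<exists>y\<in>carrier (BS d). y \<otimes>\<^bsub>BS d\<^esub> x = \<one>\<^bsub>BS d\<^esub>" unfolding BS_carrier by blast
qed

definition gen :: "nat \<Rightarrow> letter \<Rightarrow> rat \<times> int" where
  "gen d a = (case a of (GA, False) \<Rightarrow> (0, 1) | (GA, True) \<Rightarrow> (0, -1)
     | (GB, False) \<Rightarrow> (1, 0) | (GB, True) \<Rightarrow> (-1, 0))"

primrec phiw :: "nat \<Rightarrow> letter list \<Rightarrow> rat \<times> int" where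
  "phiw d [] = (0, 0)"
| "phiw d (a # w) = gen d a \<otimes>\<^bsub>MM d\<^esub> phiw d w"

context fixes d :: nat assumes d1: "d > 1" begin

lemmas [simp] = MM_carrier[OF d1] MM_mult[OF d1] MM_one[OF d1] Zd_0[OF d1] Zd_int[OF d1] Zd_nat[OF d1] Zd_1[OF d1]

lemma gen_carrier: "gen d a \<in> carrier (MM d)"
  using d1 by (auto simp: gen_def MM_carrier Zd_int Zd_0 split: gen.splits bool.splits prod.splits)

lemma phiw_carrier: "phiw d w \<in> carrier (MM d)"
proof -
  interpret group "MM d" by (rule MM_group[OF d1])
  show ?thesis
  proof (induct w)
    case Nil show ?case by simp
  next
    case (Cons a w)
    have "gen d a \<otimes>\<^bsub>MM d\<^esub> phiw d w \<in> carrier (MM d)" by (rule m_closed[OF gen_carrier Cons])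
    thus ?case by (simp only: phiw.simps)
  qed
qed

lemma phiw_append: "phiw d (u @ v) = phiw d u \<otimes>\<^bsub>MM d\<^esub> phiw d v"
proof -
  interpret group "MM d" by (rule MM_group[OF d1])
  show ?thesis
  proof (induct u)
    case Nil show ?case using phiw_carrier[of v] by simp
  next
    case (Cons a u) thus ?case using gen_carrier phiw_carrier by (simp add: m_assoc)
  qed
qed

lemma gen_cancel: "gen d (g, s) \<otimes>\<^bsub>MM d\<^esub> gen d (g, \<not> s) = (0, 0)"
  using d1 by (cases g; cases s) (simp_all add: gen_def MM_mult)

lemma phiw_rep_b: "phiw d (replicate n (GB, False)) = (of_nat n, 0)"
  using d1 by (induct n) (simp_all add: gen_def MM_mult)

lemma phiw_resp: "bs_eq d u v \<Longrightarrow> phiw d u = phiw d v"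
proof (induct rule: bs_eq.induct)
  case (bs_cancel u g s v)
  interpret group "MM d" by (rule MM_group[OF d1])
  have "phiw d ([(g, s), (g, \<not> s)] @ v) = phiw d v"
    using gen_cancel[of g s] gen_carrier phiw_carrier by (simp add: m_assoc[symmetric])
  thus ?case by (simp only: phiw_append)
next
  case (bs_rel u v)
  interpret group "MM d" by (rule MM_group[OF d1])
  have "phiw d [(GA, False), (GB, False), (GA, True)] = phiw d (replicate d (GB, False))"
    unfolding phiw_rep_b using d1 by (simp add: gen_def MM_mult)
  thus ?case by (simp only: phiw_append)
qed auto

definition Phi :: "letter list set \<Rightarrow> rat \<times> int" where
  "Phi X = phiw d (SOME w. w \<in> X)"

lemma Phi_cls: "Phi (cls d w) = phiw d w"
proof -
  have "(SOME v. v \<in> cls d w) \<in> cls d w" using cls_self by (rule someI)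
  then have "bs_eq d w (SOME v. v \<in> cls d w)" unfolding cls_def by simp
  thus ?thesis unfolding Phi_def using phiw_resp by simp
qed

lemma Phi_hom: "Phi \<in> hom (BS d) (MM d)"
proof (rule homI)
  fix x assume "x \<in> carrier (BS d)"
  then obtain w where "x = cls d w" unfolding BS_carrier by auto
  thus "Phi x \<in> carrier (MM d)" using Phi_cls phiw_carrier by simp
next
  fix x y assume "x \<in> carrier (BS d)" "y \<in> carrier (BS d)"
  then obtain u v where "x = cls d u" "y = cls d v" unfolding BS_carrier by auto
  thus "Phi (x \<otimes>\<^bsub>BS d\<^esub> y) = Phi x \<otimes>\<^bsub>MM d\<^esub> Phi y" by (simp add: BS_mult Phi_cls phiw_append)
qed

end

lemma (in group) conj_int_pow:
  assumes g: "g \<in> carrier G" and x: "x \<in> carrier G"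
  shows "g \<otimes> x [^] (q::int) \<otimes> inv g = (g \<otimes> x \<otimes> inv g) [^] q"
proof -
  define c where "c = (\<lambda>y. g \<otimes> y \<otimes> inv g)"
  have "c \<in> hom G G"
  proof (rule homI)
    fix y assume "y \<in> carrier G" thus "c y \<in> carrier G" unfolding c_def using g by simp
  next
    fix y z assume y: "y \<in> carrier G" and z: "z \<in> carrier G"
    have cancel: "\<And>w. w \<in> carrier G \<Longrightarrow> inv g \<otimes> (g \<otimes> w) = w" using g by (simp add: m_assoc[symmetric])
    show "c (y \<otimes> z) = c y \<otimes> c z" unfolding c_def using g y z cancel by (simp add: m_assoc)
  qed
  from hom_int_pow[OF this x is_group is_group, of q] show ?thesis unfolding c_def .
qed

interpretation BSg: group "BS d" for d by (rule BS_group)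

definition Aa :: "nat \<Rightarrow> letter list set" where "Aa d = cls d [(GA, False)]"
definition Bb :: "nat \<Rightarrow> letter list set" where "Bb d = cls d [(GB, False)]"
definition rep :: "nat \<Rightarrow> nat \<Rightarrow> int \<Rightarrow> int \<Rightarrow> letter list set" where
  "rep d p q s = Aa d [^]\<^bsub>BS d\<^esub> (- int p) \<otimes>\<^bsub>BS d\<^esub> Bb d [^]\<^bsub>BS d\<^esub> q \<otimes>\<^bsub>BS d\<^esub> Aa d [^]\<^bsub>BS d\<^esub> s"

lemma cls_car[simp]: "cls d w \<in> carrier (BS d)" unfolding BS_carrier by simp
lemma A_car[simp]: "Aa d \<in> carrier (BS d)" unfolding Aa_def by simp
lemma B_car[simp]: "Bb d \<in> carrier (BS d)" unfolding Bb_def by simp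
lemma rep_car[simp]: "rep d p q s \<in> carrier (BS d)" unfolding rep_def by simp

lemma cls_cons: "cls d (a # w) = cls d [a] \<otimes>\<^bsub>BS d\<^esub> cls d w"
  using BS_mult[of d "[a]" w] by simp

lemma invA: "cls d [(GA, True)] = inv\<^bsub>BS d\<^esub> Aa d"
proof -
  have "cls d [(GA, True)] \<otimes>\<^bsub>BS d\<^esub> Aa d = \<one>\<^bsub>BS d\<^esub>"
    unfolding Aa_def BS_mult BS_one cls_eq using bs_cancel[of d "[]" GA True "[]"] by simp
  thus ?thesis by (intro BSg.inv_equality[symmetric]) simp_all
qed

lemma invB: "cls d [(GB, True)] = inv\<^bsub>BS d\<^esub> Bb d"
proof -
  have "cls d [(GB, True)] \<otimes>\<^bsub>BS d\<^esub> Bb d = \<one>\<^bsub>BS d\<^esub>"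
    unfolding Bb_def BS_mult BS_one cls_eq using bs_cancel[of d "[]" GB True "[]"] by simp
  thus ?thesis by (intro BSg.inv_equality[symmetric]) simp_all
qed

lemma Bpow: "Bb d [^]\<^bsub>BS d\<^esub> (n::nat) = cls d (replicate n (GB, False))"
proof (induct n)
  case 0 show ?case by (simp add: BS_one)
next
  case (Suc n)
  have "Bb d [^]\<^bsub>BS d\<^esub> Suc n = Bb d \<otimes>\<^bsub>BS d\<^esub> Bb d [^]\<^bsub>BS d\<^esub> n" by (rule BSg.nat_pow_Suc2) simp
  also have "\<dots> = Bb d \<otimes>\<^bsub>BS d\<^esub> cls d (replicate n (GB, False))" using Suc by simp
  also have "\<dots> = cls d (replicate (Suc n) (GB, False))" unfolding Bb_def BS_mult by simp
  finally show ?case .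
qed

lemma relAB: "Aa d \<otimes>\<^bsub>BS d\<^esub> Bb d \<otimes>\<^bsub>BS d\<^esub> inv\<^bsub>BS d\<^esub> Aa d = Bb d [^]\<^bsub>BS d\<^esub> d"
proof -
  have "Aa d \<otimes>\<^bsub>BS d\<^esub> Bb d \<otimes>\<^bsub>BS d\<^esub> inv\<^bsub>BS d\<^esub> Aa d = cls d [(GA, False), (GB, False), (GA, True)]"
    unfolding invA[symmetric] unfolding Aa_def Bb_def BS_mult by simp
  also have "\<dots> = cls d (replicate d (GB, False))"
    unfolding cls_eq using bs_rel[of d "[]" "[]"] by simp
  finally show ?thesis unfolding Bpow .
qed

lemma K1: "Aa d \<otimes>\<^bsub>BS d\<^esub> Bb d [^]\<^bsub>BS d\<^esub> (q::int) \<otimes>\<^bsub>BS d\<^esub> inv\<^bsub>BS d\<^esub> Aa d = Bb d [^]\<^bsub>BS d\<^esub> (int d * q)"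
proof -
  have "Aa d \<otimes>\<^bsub>BS d\<^esub> Bb d [^]\<^bsub>BS d\<^esub> q \<otimes>\<^bsub>BS d\<^esub> inv\<^bsub>BS d\<^esub> Aa d = (Bb d [^]\<^bsub>BS d\<^esub> d) [^]\<^bsub>BS d\<^esub> q"
    using BSg.conj_int_pow[of "Aa d" d "Bb d" q] relAB by simp
  also have "\<dots> = (Bb d [^]\<^bsub>BS d\<^esub> (int d)) [^]\<^bsub>BS d\<^esub> q" by (simp add: int_pow_int)
  also have "\<dots> = Bb d [^]\<^bsub>BS d\<^esub> (int d * q)" by (rule BSg.int_pow_pow) simp
  finally show ?thesis .
qed

lemma K2: "Aa d [^]\<^bsub>BS d\<^esub> (p::nat) \<otimes>\<^bsub>BS d\<^esub> Bb d [^]\<^bsub>BS d\<^esub> (e::int) \<otimes>\<^bsub>BS d\<^esub> inv\<^bsub>BS d\<^esub> (Aa d [^]\<^bsub>BS d\<^esub> p)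
   = Bb d [^]\<^bsub>BS d\<^esub> (int d ^ p * e)"
proof (induct p arbitrary: e)
  case 0 show ?case by simp
next
  case (Suc p)
  let ?X = "Aa d [^]\<^bsub>BS d\<^esub> p"
  have "Aa d [^]\<^bsub>BS d\<^esub> Suc p \<otimes>\<^bsub>BS d\<^esub> Bb d [^]\<^bsub>BS d\<^esub> e \<otimes>\<^bsub>BS d\<^esub> inv\<^bsub>BS d\<^esub> (Aa d [^]\<^bsub>BS d\<^esub> Suc p)
      = ?X \<otimes>\<^bsub>BS d\<^esub> (Aa d \<otimes>\<^bsub>BS d\<^esub> Bb d [^]\<^bsub>BS d\<^esub> e \<otimes>\<^bsub>BS d\<^esub> inv\<^bsub>BS d\<^esub> Aa d) \<otimes>\<^bsub>BS d\<^esub> inv\<^bsub>BS d\<^esub> ?X"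
    by (simp add: BSg.inv_mult_group BSg.m_assoc)
  also have "\<dots> = ?X \<otimes>\<^bsub>BS d\<^esub> Bb d [^]\<^bsub>BS d\<^esub> (int d * e) \<otimes>\<^bsub>BS d\<^esub> inv\<^bsub>BS d\<^esub> ?X" unfolding K1 ..
  also have "\<dots> = Bb d [^]\<^bsub>BS d\<^esub> (int d ^ p * (int d * e))" by (rule Suc)
  finally show ?case by (simp add: ac_simps)
qed


context group begin

definition Rw :: "'a \<Rightarrow> 'a \<Rightarrow> nat \<Rightarrow> int \<Rightarrow> int \<Rightarrow> 'a" where
  "Rw a b p q s = a [^] (- int p) \<otimes> b [^] q \<otimes> a [^] s"

lemma Rw_A:
  assumes a: "a \<in> carrier G" and b: "b \<in> carrier G"
    and K: "\<And>p e. a [^] (p::nat) \<otimes> b [^] (e::int) \<otimes> inv (a [^] p) = b [^] (int dd ^ p * e)"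
  shows "a \<otimes> Rw a b p q s = (if p = 0 then Rw a b 0 (int dd * q) (s + 1) else Rw a b (p - 1) q s)"
proof (cases p)
  case 0
  have K1: "a \<otimes> b [^] q \<otimes> inv a = b [^] (int dd * q)" using K[of 1 q] a by simp
  have cancel: "\<And>w. w \<in> carrier G \<Longrightarrow> inv a \<otimes> (a \<otimes> w) = w" using a by (simp add: m_assoc[symmetric])
  have "a \<otimes> Rw a b p q s = (a \<otimes> b [^] q \<otimes> inv a) \<otimes> (a \<otimes> a [^] s)"
    unfolding Rw_def 0 using a b cancel by (simp add: m_assoc)
  also have "a \<otimes> a [^] s = a [^] (s + 1)" using int_pow_mult[OF a, of 1 s] a by (simp add: add.commute)
  finally show ?thesis unfolding K1 Rw_def 0 using a b by (simp add: m_assoc)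
next
  case (Suc p')
  have "a \<otimes> a [^] (- int p) = a [^] (1 + - int p)" using int_pow_mult[OF a, of 1 "- int p"] a by simp
  also have "1 + - int p = - int p'" using Suc by simp
  finally show ?thesis unfolding Rw_def using a b Suc by (simp add: m_assoc[symmetric])
qed

lemma Rw_invA:
  assumes a: "a \<in> carrier G" and b: "b \<in> carrier G"
  shows "inv a \<otimes> Rw a b p q s = Rw a b (Suc p) q s"
proof -
  have "inv a \<otimes> a [^] (- int p) = a [^] (- 1 + - int p)"
    using int_pow_mult[OF a, of "-1" "- int p"] a by (simp add: int_pow_neg)
  also have "- 1 + - int p = - int (Suc p)" by simp
  finally show ?thesis unfolding Rw_def using a b by (simp add: m_assoc[symmetric])
qed

lemma Rw_B:
  assumes a: "a \<in> carrier G" and b: "b \<in> carrier G"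
    and K: "\<And>p e. a [^] (p::nat) \<otimes> b [^] (e::int) \<otimes> inv (a [^] p) = b [^] (int dd ^ p * e)"
  shows "b [^] (e::int) \<otimes> Rw a b p q s = Rw a b p (int dd ^ p * e + q) s"
proof -
  let ?P = "a [^] p"
  have Pc: "?P \<in> carrier G" using a by simp
  have neg: "a [^] (- int p) = inv ?P" using int_pow_neg_int[OF a] .
  have "b [^] e \<otimes> a [^] (- int p) = inv ?P \<otimes> (?P \<otimes> b [^] e \<otimes> inv ?P)"
    unfolding neg using Pc b by (simp add: m_assoc[symmetric])
  also have "\<dots> = a [^] (- int p) \<otimes> b [^] (int dd ^ p * e)" unfolding K neg ..
  finally have 1: "b [^] e \<otimes> a [^] (- int p) = a [^] (- int p) \<otimes> b [^] (int dd ^ p * e)" .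
  have 2: "b [^] (int dd ^ p * e) \<otimes> b [^] q = b [^] (int dd ^ p * e + q)" using int_pow_mult[OF b] by simp
  have "b [^] e \<otimes> Rw a b p q s = (b [^] e \<otimes> a [^] (- int p)) \<otimes> b [^] q \<otimes> a [^] s"
    unfolding Rw_def using a b by (simp add: m_assoc)
  also have "\<dots> = a [^] (- int p) \<otimes> (b [^] (int dd ^ p * e) \<otimes> b [^] q) \<otimes> a [^] s"
    unfolding 1 using a b by (simp add: m_assoc)
  also have "\<dots> = Rw a b p (int dd ^ p * e + q) s" unfolding 2 Rw_def ..
  finally show ?thesis .
qed

lemma Rw_lift:
  assumes a: "a \<in> carrier G" and b: "b \<in> carrier G"
    and K: "\<And>p e. a [^] (p::nat) \<otimes> b [^] (e::int) \<otimes> inv (a [^] p) = b [^] (int dd ^ p * e)"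
  shows "Rw a b p q s = Rw a b (Suc p) (int dd * q) (s + 1)"
proof -
  have K1: "b [^] (int dd * q) = a \<otimes> b [^] q \<otimes> inv a" using K[of 1 q] a by simp
  have e1: "a [^] (- int (Suc p)) = a [^] (- int p) \<otimes> inv a"
  proof -
    have "a [^] (- int (Suc p)) = a [^] (- int p + -1)" by (simp add: algebra_simps)
    also have "\<dots> = a [^] (- int p) \<otimes> a [^] (-1::int)" by (rule int_pow_mult[OF a])
    also have "a [^] (-1::int) = inv a" using a by (simp add: int_pow_neg)
    finally show ?thesis .
  qed
  have e2: "a [^] (s + 1) = a \<otimes> a [^] s" using int_pow_mult[OF a, of 1 s] a by (simp add: add.commute)
  have cancel: "\<And>w. w \<in> carrier G \<Longrightarrow> inv a \<otimes> (a \<otimes> w) = w" using a by (simp add: m_assoc[symmetric])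
  show ?thesis unfolding Rw_def e1 e2 K1 using a b cancel by (simp add: m_assoc)
qed

lemma Rw_liftN:
  assumes a: "a \<in> carrier G" and b: "b \<in> carrier G"
    and K: "\<And>p e. a [^] (p::nat) \<otimes> b [^] (e::int) \<otimes> inv (a [^] p) = b [^] (int dd ^ p * e)"
  shows "Rw a b p q s = Rw a b (p + t) (int dd ^ t * q) (s + int t)"
proof (induct t)
  case 0 show ?case by simp
next
  case (Suc t)
  have "Rw a b (p + t) (int dd ^ t * q) (s + int t) = Rw a b (Suc (p + t)) (int dd * (int dd ^ t * q)) (s + int t + 1)"
    by (rule Rw_lift[OF a b K])
  thus ?case using Suc by (simp add: ac_simps)
qed

end

lemma rep_Rw: "rep d p q s = BSg.Rw d (Aa d) (Bb d) p q s"
  unfolding rep_def BSg.Rw_def ..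

lemma every_rep: "X \<in> carrier (BS d) \<Longrightarrow> \<exists>p q s. X = rep d p q s"
proof -
  assume "X \<in> carrier (BS d)"
  then obtain w where X: "X = cls d w" unfolding BS_carrier by auto
  have "\<exists>p q s. cls d w = BSg.Rw d (Aa d) (Bb d) p q s"
  proof (induct w)
    case Nil
    have "cls d [] = BSg.Rw d (Aa d) (Bb d) 0 0 0" unfolding BSg.Rw_def by (simp add: BS_one)
    thus ?case by blast
  next
    case (Cons a w)
    then obtain p q s where IH: "cls d w = BSg.Rw d (Aa d) (Bb d) p q s" by blast
    obtain g t where a: "a = (g, t)" by (cases a)
    have ce: "cls d (a # w) = cls d [a] \<otimes>\<^bsub>BS d\<^esub> BSg.Rw d (Aa d) (Bb d) p q s" unfolding IH[symmetric] by (rule cls_cons)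
    have cases4: "a = (GA, True) \<or> a = (GA, False) \<or> a = (GB, True) \<or> a = (GB, False)"
      unfolding a by (cases g; cases t) auto
    moreover have ?case if aa: "a = (GA, True)"
    proof -
      have "cls d (a # w) = inv\<^bsub>BS d\<^esub> Aa d \<otimes>\<^bsub>BS d\<^esub> BSg.Rw d (Aa d) (Bb d) p q s" using ce aa invA by simp
      thus ?thesis using BSg.Rw_invA[where a="Aa d" and b="Bb d" and p=p and q=q and s=s] by auto
    qed
    moreover have ?case if aa: "a = (GA, False)"
    proof -
      have "cls d (a # w) = Aa d \<otimes>\<^bsub>BS d\<^esub> BSg.Rw d (Aa d) (Bb d) p q s" using ce aa Aa_def by simp
      thus ?thesis using BSg.Rw_A[where a="Aa d" and b="Bb d" and dd=d and p=p and q=q and s=s] K2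
        by (auto split: if_splits)
    qed
    moreover have ?case if aa: "a = (GB, True)"
    proof -
      have "cls d (a # w) = Bb d [^]\<^bsub>BS d\<^esub> (-1::int) \<otimes>\<^bsub>BS d\<^esub> BSg.Rw d (Aa d) (Bb d) p q s"
        using ce aa invB BSg.int_pow_neg[where x="Bb d" and i=1] by simp
      thus ?thesis using BSg.Rw_B[where a="Aa d" and b="Bb d" and dd=d and e="-1" and p=p and q=q and s=s] K2 by auto
    qed
    moreover have ?case if aa: "a = (GB, False)"
    proof -
      have "cls d (a # w) = Bb d [^]\<^bsub>BS d\<^esub> (1::int) \<otimes>\<^bsub>BS d\<^esub> BSg.Rw d (Aa d) (Bb d) p q s"
        using ce aa Bb_def by simp
      thus ?thesis using BSg.Rw_B[where a="Aa d" and b="Bb d" and dd=d and e=1 and p=p and q=q and s=s] K2 by auto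
    qed
    ultimately show ?case by blast
  qed
  thus ?thesis unfolding X rep_Rw by blast
qed

lemma rep_liftN: "rep d p q s = rep d (p + t) (int d ^ t * q) (s + int t)"
  unfolding rep_Rw by (rule BSg.Rw_liftN) (simp_all add: K2)


context fixes d :: nat assumes d1: "d > 1" begin

lemmas [simp] = MM_carrier[OF d1] MM_mult[OF d1] MM_one[OF d1] MM_inv[OF d1] Zd_uminus[OF d1] Zd_0[OF d1] Zd_int[OF d1] Zd_nat[OF d1] Zd_1[OF d1]

lemma MM_ipow_a: "(0, 1) [^]\<^bsub>MM d\<^esub> (j::int) = (0, j)"
  by (simp add: int_pow_def2 MM_pow_a[OF d1])

lemma MM_ipow_b: "(1, 0) [^]\<^bsub>MM d\<^esub> (q::int) = (of_int q, 0)"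
  by (simp add: int_pow_def2 MM_pow_b[OF d1])

lemma Phi_A: "Phi d (Aa d) = (0, 1)" unfolding Aa_def Phi_cls[OF d1] by (simp add: gen_def)
lemma Phi_B: "Phi d (Bb d) = (1, 0)" unfolding Bb_def Phi_cls[OF d1] by (simp add: gen_def)

lemma Phi_rep: "Phi d (rep d p q s) = (of_int q / of_nat d ^ p, s - int p)"
proof -
  have h: "Phi d \<in> hom (BS d) (MM d)" by (rule Phi_hom[OF d1])
  have pA: "Phi d (Aa d [^]\<^bsub>BS d\<^esub> (j::int)) = (0, j)" for j
    using hom_int_pow[OF h A_car BS_group MM_group[OF d1], of j] Phi_A MM_ipow_a by simp
  have pB: "Phi d (Bb d [^]\<^bsub>BS d\<^esub> (j::int)) = (of_int j, 0)" for j
    using hom_int_pow[OF h B_car BS_group MM_group[OF d1], of j] Phi_B MM_ipow_b by simp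
  have "Phi d (rep d p q s) = Phi d (Aa d [^]\<^bsub>BS d\<^esub> (- int p)) \<otimes>\<^bsub>MM d\<^esub> Phi d (Bb d [^]\<^bsub>BS d\<^esub> q)
      \<otimes>\<^bsub>MM d\<^esub> Phi d (Aa d [^]\<^bsub>BS d\<^esub> s)"
    unfolding rep_def using hom_mult[OF h] by simp
  also have "\<dots> = (of_nat d powi (- int p) * of_int q, s - int p)" unfolding pA pB by simp
  also have "of_nat d powi (- int p) * (of_int q :: rat) = of_int q / of_nat d ^ p"
    by (simp add: power_int_minus field_simps)
  finally show ?thesis .
qed

lemma Phi_bij: "bij_betw (Phi d) (carrier (BS d)) (carrier (MM d))"
  unfolding bij_betw_def
proof
  show "inj_on (Phi d) (carrier (BS d))"
  proof (rule inj_onI)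
    fix X Y assume X: "X \<in> carrier (BS d)" and Y: "Y \<in> carrier (BS d)" and eq: "Phi d X = Phi d Y"
    obtain p q s where Xr: "X = rep d p q s" using every_rep[OF X] by blast
    obtain p' q' s' where Yr: "Y = rep d p' q' s'" using every_rep[OF Y] by blast
    have X2: "X = rep d (p + p') (int d ^ p' * q) (s + int p')" using Xr rep_liftN by blast
    have Y2: "Y = rep d (p + p') (int d ^ p * q') (s' + int p)" using Yr rep_liftN[of d p' q' s' p] by (simp add: add.commute)
    have "(of_int (int d ^ p' * q) / of_nat d ^ (p + p') :: rat, s + int p' - int (p + p'))
        = (of_int (int d ^ p * q') / of_nat d ^ (p + p'), s' + int p - int (p + p'))"
      using eq unfolding X2 Y2 Phi_rep .
    then have e1: "(of_int (int d ^ p' * q) :: rat) = of_int (int d ^ p * q')" and e2: "s + int p' = s' + int p"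
      using d1 by (auto simp: divide_cancel_right)
    have "int d ^ p' * q = int d ^ p * q'" using e1 of_int_eq_iff by blast
    thus "X = Y" unfolding X2 Y2 using e2 by simp
  qed
next
  show "Phi d ` carrier (BS d) = carrier (MM d)"
  proof
    show "Phi d ` carrier (BS d) \<subseteq> carrier (MM d)"
      by (rule hom_carrier[OF Phi_hom[OF d1]])
  next
    show "carrier (MM d) \<subseteq> Phi d ` carrier (BS d)"
    proof
      fix z assume "z \<in> carrier (MM d)"
      then obtain y l where z: "z = (y, l)" "y \<in> Zd d" by (cases z) auto
      then obtain q p where y: "y = of_int q / of_nat d ^ p" unfolding Zd_def by blast
      have "Phi d (rep d p q (l + int p)) = z" unfolding Phi_rep z y by simp
      thus "z \<in> Phi d ` carrier (BS d)" by (metis rep_car image_eqI)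
    qed
  qed
qed

end

theorem proposition9p9:
  fixes d n :: nat
  assumes "d > 1" and "n \<ge> 1"
  shows "num_conj_classes_index (BS d) n =
         card {C \<in> S_set d // S_rel d. class_degree d C dvd n}"
proof -
  have "num_conj_classes_index (BS d) n = num_conj_classes_index (MM d) n"
    by (rule iso_transfer[OF BS_group MM_group[OF assms(1)] Phi_hom[OF assms(1)] Phi_bij[OF assms(1)]])
  also have "\<dots> = card {C \<in> S_set d // S_rel d. class_degree d C dvd n}"
    unfolding num_conj_classes_index_def by (rule M_count[OF assms(1) assms(2)])
  finally show ?thesis .
qed


end
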